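(* Let $P,P_1,P_2\in\mathbb R^{d\times d}$ be irreducible stochastic matrices with stationary distributions $\mu,\mu_1,\mu_2$. Then: 1. For any $y\in\mathbb R^d$ with $\mu^\top y=0$, the vector $x:=\sum_{k=0}^\infty\mathcal P^ky/2$ is a solution of the Poisson equation $(I-P)x=y$, and $\|x\|_\infty\le\frac{C}{1-\rho}\|y\|_\infty$, where $(C,\rho)$ are mixing parameters of $\mathcal P$. 2. Let $y_1,y_2\in\mathbb R^d$ with $\mu_1^\top y_1=\mu_2^\top y_2=0$, and let $x_1=\sum_{k=0}^\infty\mathcal P_1^ky_1/2$ and $x_2=\sum_{k=0}^\infty\mathcal P_2^ky_2/2$ be the solutions of $(I-P_1)x=y_1$ and $(I-P_2)x=y_2$. Then \[ \|x_1-x_2\|_\infty\le\frac14\left(\frac{\log(\|P_1-P_2\|_\infty(1-\rho_{\max}))-\log(8C_{\max})}{\log(\rho_{\max})}\right)^2\|P_1-P_2\|_\infty(\|y_1\|_\infty+\|y_2\|_\infty) +\frac12\left(\frac{\log(\|P_1-P_2\|_\infty(1-\rho_{\max}))-\log(8C_{\max})}{\log(\rho_{\max})}\right)\|y_1-y_2\|_\infty, \] where $C_{\max}=\max(C_1,C_2)$, $\rho_{\max}=\max(\rho_1,\rho_2)$, and $(C_1,\rho_1)$, $(C_2,\rho_2)$ are mixing parameters of $\mathcal P_1$, $\mathcal P_2$.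
   Context: For an irreducible stochastic matrix $P$ on a finite set of size $d$, $\mathcal P=(P+I)/2$ denotes the associated lazy transition matrix (likewise $\mathcal P_i=(P_i+I)/2$); it is irreducible, aperiodic and has the same stationary distribution. A pair $(C,\rho)$ with $C>0$, $\rho\in(0,1)$ is called mixing parameters of $\mathcal P$ if $\max_{i}\|\mathcal P^k(i,\cdot)-\mu(\cdot)\|_{\mathrm{TV}}\le C\rho^k$ for all $k\ge0$, where $\|\cdot\|_{\mathrm{TV}}$ is total variation distance (half the $\ell_1$ distance). For vectors $\|\cdot\|_\infty$ is the max norm; for matrices it is the induced norm (maximum absolute row sum). *)

theory Defs
  imports "HOL-Analysis.Analysis"
begin

text \<open>Matrix power with respect to matrix multiplication (the componentwise ring
  structure on vec makes ^ unusable for this).\<close>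
definition mpow :: "real^'n^'n \<Rightarrow> nat \<Rightarrow> real^'n^'n" where
  "mpow A k = ((\<lambda>M. M ** A) ^^ k) (mat 1)"

definition stochastic :: "real^'n^'n \<Rightarrow> bool" where
  "stochastic P \<longleftrightarrow> (\<forall>i j. P$i$j \<ge> 0) \<and> (\<forall>i. (\<Sum>j\<in>UNIV. P$i$j) = 1)"

definition irreducible :: "real^'n^'n \<Rightarrow> bool" where
  "irreducible P \<longleftrightarrow> (\<forall>i j. \<exists>k. mpow P k $ i $ j > 0)"

definition stationary_dist :: "real^'n^'n \<Rightarrow> real^'n \<Rightarrow> bool" where
  "stationary_dist P \<mu> \<longleftrightarrow> (\<forall>i. \<mu>$i \<ge> 0) \<and> (\<Sum>i\<in>UNIV. \<mu>$i) = 1 \<and> \<mu> v* P = \<mu>"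

definition lazy :: "real^'n^'n \<Rightarrow> real^'n^'n" where
  "lazy P = (1/2) *\<^sub>R (P + mat 1)"

definition tv_dist :: "real^'n \<Rightarrow> real^'n \<Rightarrow> real" where
  "tv_dist p q = (1/2) * (\<Sum>j\<in>UNIV. \<bar>p$j - q$j\<bar>)"

definition mixing_params :: "real^'n^'n \<Rightarrow> real^'n \<Rightarrow> real \<Rightarrow> real \<Rightarrow> bool" where
  "mixing_params Q \<mu> C \<rho> \<longleftrightarrow> C > 0 \<and> 0 < \<rho> \<and> \<rho> < 1 \<and>
     (\<forall>k. (MAX i\<in>UNIV. tv_dist (mpow Q k $ i) \<mu>) \<le> C * \<rho> ^ k)"

definition vnorm_inf :: "real^'n \<Rightarrow> real" where
  "vnorm_inf x = (MAX i\<in>UNIV. \<bar>x$i\<bar>)"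

definition mnorm_inf :: "real^'n^'n \<Rightarrow> real" where
  "mnorm_inf A = (MAX i\<in>UNIV. \<Sum>j\<in>UNIV. \<bar>A$i$j\<bar>)"

end

theory Submission
  imports Defs "HOL-Computational_Algebra.Fundamental_Theorem_Algebra"
begin


lemma mpow_0[simp]: "mpow A 0 = mat 1" by (simp add: mpow_def)
lemma mpow_Suc: "mpow A (Suc k) = mpow A k ** A" by (simp add: mpow_def)

lemma mpow_add: "mpow A (m + n) = mpow A m ** mpow A n"
proof (induction n)
  case 0 then show ?case by (simp add: matrix_mul_rid)
next
  case (Suc n) then show ?case by (simp add: mpow_Suc matrix_mul_assoc)
qed

lemma mpow_Suc': "mpow A (Suc k) = A ** mpow A k"
  using mpow_add[of A 1 k] by (simp add: mpow_Suc matrix_mul_lid)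

lemma fin_ne: "finite (UNIV::'n::finite set)" "UNIV \<noteq> ({}::'n::finite set)" by auto

lemma vn_ge: "\<bar>x$i\<bar> \<le> vnorm_inf x"
  unfolding vnorm_inf_def by (rule Max_ge) auto

lemma vn_le: "(\<And>i. \<bar>x$i\<bar> \<le> c) \<Longrightarrow> vnorm_inf x \<le> c"
  unfolding vnorm_inf_def by (subst Max_le_iff) auto

lemma vn_attained: "\<exists>i. vnorm_inf x = \<bar>x$i\<bar>"
proof -
  have "Max (range (\<lambda>i. \<bar>x$i\<bar>)) \<in> range (\<lambda>i. \<bar>x$i\<bar>)" by (rule Max_in) auto
  then obtain i where "Max (range (\<lambda>i. \<bar>x$i\<bar>)) = \<bar>x$i\<bar>" by blast
  then show ?thesis unfolding vnorm_inf_def by blast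
qed

lemma mn_attained: "\<exists>i. mnorm_inf A = (\<Sum>j\<in>UNIV. \<bar>A$i$j\<bar>)"
proof -
  have "Max (range (\<lambda>i. \<Sum>j\<in>UNIV. \<bar>A$i$j\<bar>)) \<in> range (\<lambda>i. \<Sum>j\<in>UNIV. \<bar>A$i$j\<bar>)" by (rule Max_in) auto
  then obtain i where "Max (range (\<lambda>i. \<Sum>j\<in>UNIV. \<bar>A$i$j\<bar>)) = (\<Sum>j\<in>UNIV. \<bar>A$i$j\<bar>)" by blast
  then show ?thesis unfolding mnorm_inf_def by blast
qed

lemma vn_nonneg: "0 \<le> vnorm_inf x"
  using vn_ge[of x undefined] by linarith

lemma vn_add: "vnorm_inf (x + y) \<le> vnorm_inf x + vnorm_inf y"
  by (rule vn_le) (smt (verit) vector_add_component vn_ge abs_triangle_ineq)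

lemma vn_diff: "vnorm_inf (x - y) \<le> vnorm_inf x + vnorm_inf y"
  by (rule vn_le) (smt (verit) vector_minus_component vn_ge)

lemma vn_scale: "vnorm_inf (c *\<^sub>R x) = \<bar>c\<bar> * vnorm_inf x"
proof (rule antisym)
  show "vnorm_inf (c *\<^sub>R x) \<le> \<bar>c\<bar> * vnorm_inf x"
    by (rule vn_le) (simp add: abs_mult mult_left_mono vn_ge)
  obtain i where "vnorm_inf x = \<bar>x$i\<bar>" using vn_attained by blast
  then show "\<bar>c\<bar> * vnorm_inf x \<le> vnorm_inf (c *\<^sub>R x)"
    using vn_ge[of "c *\<^sub>R x" i] by (simp add: abs_mult)
qed

lemma vn_minus: "vnorm_inf (x - y) = vnorm_inf (y - x)"
  using vn_scale[of "-1" "x - y"] by simp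

lemma mn_ge: "(\<Sum>j\<in>UNIV. \<bar>A$i$j\<bar>) \<le> mnorm_inf A"
  unfolding mnorm_inf_def by (rule Max_ge) auto

lemma mn_le: "(\<And>i. (\<Sum>j\<in>UNIV. \<bar>A$i$j\<bar>) \<le> c) \<Longrightarrow> mnorm_inf A \<le> c"
  unfolding mnorm_inf_def by (subst Max_le_iff) auto

lemma mn_nonneg: "0 \<le> mnorm_inf A"
  using mn_ge[of A undefined] by (meson order_trans sum_nonneg abs_ge_zero)

lemma mv_bound: "vnorm_inf (A *v x) \<le> mnorm_inf A * vnorm_inf x"
proof (rule vn_le)
  fix i
  have "\<bar>(A *v x)$i\<bar> = \<bar>\<Sum>j\<in>UNIV. A$i$j * x$j\<bar>" by (simp add: matrix_vector_mult_def)
  also have "\<dots> \<le> (\<Sum>j\<in>UNIV. \<bar>A$i$j\<bar> * vnorm_inf x)"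
    by (rule order_trans[OF sum_abs]) (auto intro!: sum_mono simp: abs_mult mult_left_mono vn_ge)
  also have "\<dots> \<le> mnorm_inf A * vnorm_inf x"
    by (simp add: sum_distrib_right[symmetric] mult_right_mono mn_ge vn_nonneg)
  finally show "\<bar>(A *v x)$i\<bar> \<le> mnorm_inf A * vnorm_inf x" .
qed

lemma mm_bound: "mnorm_inf (A ** B) \<le> mnorm_inf A * mnorm_inf B"
proof (rule mn_le)
  fix i
  have "(\<Sum>j\<in>UNIV. \<bar>(A ** B)$i$j\<bar>) \<le> (\<Sum>j\<in>UNIV. \<Sum>k\<in>UNIV. \<bar>A$i$k\<bar> * \<bar>B$k$j\<bar>)"
    by (auto simp: matrix_matrix_mult_def abs_mult[symmetric] intro!: sum_mono sum_abs)
  also have "\<dots> = (\<Sum>k\<in>UNIV. \<bar>A$i$k\<bar> * (\<Sum>j\<in>UNIV. \<bar>B$k$j\<bar>))"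
    by (subst sum.swap) (simp add: sum_distrib_left)
  also have "\<dots> \<le> (\<Sum>k\<in>UNIV. \<bar>A$i$k\<bar> * mnorm_inf B)"
    by (auto intro!: sum_mono mult_left_mono mn_ge)
  also have "\<dots> \<le> mnorm_inf A * mnorm_inf B"
    by (simp add: sum_distrib_right[symmetric] mult_right_mono mn_ge mn_nonneg)
  finally show "(\<Sum>j\<in>UNIV. \<bar>(A ** B)$i$j\<bar>) \<le> mnorm_inf A * mnorm_inf B" .
qed

lemma mn_add: "mnorm_inf (A + B) \<le> mnorm_inf A + mnorm_inf B"
proof (rule mn_le)
  fix i
  have "(\<Sum>j\<in>UNIV. \<bar>(A + B)$i$j\<bar>) \<le> (\<Sum>j\<in>UNIV. \<bar>A$i$j\<bar> + \<bar>B$i$j\<bar>)"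
    by (auto intro!: sum_mono abs_triangle_ineq)
  also have "\<dots> \<le> mnorm_inf A + mnorm_inf B" by (simp add: sum.distrib add_mono mn_ge)
  finally show "(\<Sum>j\<in>UNIV. \<bar>(A + B)$i$j\<bar>) \<le> mnorm_inf A + mnorm_inf B" .
qed

lemma mn_scale: "mnorm_inf (c *\<^sub>R A) = \<bar>c\<bar> * mnorm_inf A"
proof (rule antisym)
  show "mnorm_inf (c *\<^sub>R A) \<le> \<bar>c\<bar> * mnorm_inf A"
    by (rule mn_le) (simp add: abs_mult sum_distrib_left[symmetric] mult_left_mono mn_ge)
  obtain i where "mnorm_inf A = (\<Sum>j\<in>UNIV. \<bar>A$i$j\<bar>)" using mn_attained by blast
  then show "\<bar>c\<bar> * mnorm_inf A \<le> mnorm_inf (c *\<^sub>R A)"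
    using mn_ge[of "c *\<^sub>R A" i] by (simp add: abs_mult sum_distrib_left)
qed



lemma stoch_rows: "stochastic A \<Longrightarrow> (\<Sum>j\<in>UNIV. A$i$j) = 1" and stoch_nonneg: "stochastic A \<Longrightarrow> 0 \<le> A$i$j"
  by (auto simp: stochastic_def)

lemma stoch_mn: assumes "stochastic A" shows "mnorm_inf A \<le> 1"
  by (rule mn_le) (use assms in \<open>simp add: stochastic_def\<close>)

lemma stoch_I: "stochastic (mat 1 :: real^'n^'n)"
proof -
  have "(\<Sum>j\<in>UNIV. (mat 1 :: real^'n^'n)$i$j) = 1" for i
    by (simp add: mat_def sum.delta)
  then show ?thesis by (auto simp: stochastic_def mat_def)
qed

lemma stoch_mult: assumes "stochastic A" "stochastic B" shows "stochastic (A ** B)"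
proof -
  have "(\<Sum>j\<in>UNIV. (A ** B)$i$j) = 1" for i
  proof -
    have "(\<Sum>j\<in>UNIV. (A ** B)$i$j) = (\<Sum>k\<in>UNIV. A$i$k * (\<Sum>j\<in>UNIV. B$k$j))"
      by (simp add: matrix_matrix_mult_def sum_distrib_left) (rule sum.swap)
    also have "\<dots> = 1" using assms by (simp add: stochastic_def)
    finally show ?thesis .
  qed
  moreover have "0 \<le> (A ** B)$i$j" for i j
    using assms by (auto simp: matrix_matrix_mult_def stochastic_def intro!: sum_nonneg)
  ultimately show ?thesis by (auto simp: stochastic_def)
qed

lemma stoch_mpow: "stochastic A \<Longrightarrow> stochastic (mpow A k)"
  by (induction k) (auto simp: mpow_Suc stoch_I stoch_mult)

lemma stoch_lazy: assumes "stochastic P" shows "stochastic (lazy P)"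
proof -
  have "(\<Sum>j\<in>UNIV. (lazy P)$i$j) = 1" for i
    using assms by (simp add: lazy_def stochastic_def sum.distrib mat_def sum.delta sum_divide_distrib[symmetric])
  moreover have "0 \<le> (lazy P)$i$j" for i j
    using assms by (auto simp: lazy_def stochastic_def mat_def)
  ultimately show ?thesis by (auto simp: stochastic_def)
qed

lemma lazy_diag: "stochastic P \<Longrightarrow> (lazy P)$i$i \<ge> 1/2"
  by (auto simp: lazy_def stochastic_def mat_def)

lemma lazy_offdiag: "i \<noteq> j \<Longrightarrow> (lazy P)$i$j = P$i$j / 2"
  by (auto simp: lazy_def mat_def)

lemma lazy_diff: "lazy P1 - lazy P2 = (1/2) *\<^sub>R (P1 - P2)"
  by (simp add: lazy_def algebra_simps)

lemma mn_lazy_diff: "mnorm_inf (lazy P1 - lazy P2) = mnorm_inf (P1 - P2) / 2"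
  by (simp add: lazy_diff mn_scale)

lemma mm_diff_left: "(A::real^'n^'n) ** (B - C) = A ** B - A ** C"
  by (simp add: matrix_matrix_mult_def vec_eq_iff sum_subtractf right_diff_distrib)
lemma mm_diff_right: "((A::real^'n^'n) - B) ** C = A ** C - B ** C"
  by (simp add: matrix_matrix_mult_def vec_eq_iff sum_subtractf left_diff_distrib)

lemma mpow_diff_bound:
  assumes "stochastic A" "stochastic B"
  shows "mnorm_inf (mpow A k - mpow B k) \<le> k * mnorm_inf (A - B)"
proof (induction k)
  case 0 then show ?case by (simp add: mnorm_inf_def)
next
  case (Suc k)
  have eq: "mpow A (Suc k) - mpow B (Suc k) = mpow A k ** (A - B) + (mpow A k - mpow B k) ** B"
    unfolding mpow_Suc mm_diff_left mm_diff_right by simp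
  have a: "mnorm_inf (mpow A k) \<le> 1" by (rule stoch_mn[OF stoch_mpow[OF assms(1)]])
  have b: "mnorm_inf B \<le> 1" by (rule stoch_mn[OF assms(2)])
  have "mnorm_inf (mpow A k ** (A - B)) \<le> mnorm_inf (mpow A k) * mnorm_inf (A - B)" by (rule mm_bound)
  also have "\<dots> \<le> 1 * mnorm_inf (A - B)" by (rule mult_right_mono[OF a mn_nonneg])
  finally have c: "mnorm_inf (mpow A k ** (A - B)) \<le> mnorm_inf (A - B)" by simp
  have "mnorm_inf ((mpow A k - mpow B k) ** B) \<le> mnorm_inf (mpow A k - mpow B k) * mnorm_inf B" by (rule mm_bound)
  also have "\<dots> \<le> mnorm_inf (mpow A k - mpow B k) * 1" by (rule mult_left_mono[OF b mn_nonneg])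
  finally have d: "mnorm_inf ((mpow A k - mpow B k) ** B) \<le> k * mnorm_inf (A - B)" using Suc.IH by simp
  have "mnorm_inf (mpow A (Suc k) - mpow B (Suc k)) \<le> mnorm_inf (A - B) + k * mnorm_inf (A - B)"
    unfolding eq using mn_add c d by (meson add_mono order_trans)
  then show ?case by (simp add: algebra_simps)
qed

lemma stat_mpow: "\<mu> v* A = \<mu> \<Longrightarrow> \<mu> v* mpow A k = \<mu>"
  by (induction k) (auto simp: mpow_Suc vector_matrix_mul_assoc[symmetric] vector_matrix_mul_rid)

lemma stat_lazy: assumes "\<mu> v* P = \<mu>" shows "\<mu> v* lazy P = \<mu>"
proof -
  have "\<mu> v* lazy P = (1/2) *\<^sub>R (\<mu> v* P + \<mu> v* mat 1)"
    by (simp add: lazy_def vec_eq_iff vector_matrix_mult_def sum.distrib sum_distrib_left algebra_simps)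
  then show ?thesis using assms by (simp add: vector_matrix_mul_rid)
qed

lemma dot_mv: "\<mu> \<bullet> (A *v y) = (\<mu> v* A) \<bullet> (y::real^'n)"
  by (simp add: inner_vec_def matrix_vector_mult_def vector_matrix_mult_def sum_distrib_left sum_distrib_right mult_ac) (rule sum.swap)

lemma stoch_contract: assumes "stochastic Q" shows "vnorm_inf (Q *v y) \<le> vnorm_inf y"
proof -
  have "vnorm_inf (Q *v y) \<le> mnorm_inf Q * vnorm_inf y" by (rule mv_bound)
  also have "\<dots> \<le> 1 * vnorm_inf y" by (rule mult_right_mono[OF stoch_mn[OF assms] vn_nonneg])
  finally show ?thesis by simp
qed

lemma row_tv:
  fixes \<mu> y :: "real^'n"
  assumes "\<mu> \<bullet> y = 0"
  shows "\<bar>(M *v y)$i\<bar> \<le> 2 * tv_dist (M$i) \<mu> * vnorm_inf y"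
proof -
  have "(M *v y)$i = (\<Sum>j\<in>UNIV. M$i$j * y$j) - (\<Sum>j\<in>UNIV. \<mu>$j * y$j)"
    using assms by (simp add: matrix_vector_mult_def inner_vec_def)
  also have "\<dots> = (\<Sum>j\<in>UNIV. (M$i$j - \<mu>$j) * y$j)" by (simp add: sum_subtractf left_diff_distrib)
  finally have "\<bar>(M *v y)$i\<bar> \<le> (\<Sum>j\<in>UNIV. \<bar>M$i$j - \<mu>$j\<bar> * vnorm_inf y)"
    by (auto intro!: order_trans[OF sum_abs] sum_mono simp: abs_mult mult_left_mono vn_ge)
  also have "\<dots> = 2 * tv_dist (M$i) \<mu> * vnorm_inf y"
    by (simp add: tv_dist_def sum_distrib_right)
  finally show ?thesis .
qed

lemma mix_bound:
  fixes \<mu> y :: "real^'n"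
  assumes "mixing_params Q \<mu> C \<rho>" "\<mu> \<bullet> y = 0"
  shows "vnorm_inf (mpow Q k *v y) \<le> 2 * C * \<rho>^k * vnorm_inf y"
proof (rule vn_le)
  fix i
  have "tv_dist (mpow Q k $ i) \<mu> \<le> (MAX i\<in>UNIV. tv_dist (mpow Q k $ i) \<mu>)" by (rule Max_ge) auto
  also have "\<dots> \<le> C * \<rho>^k" using assms(1) by (simp add: mixing_params_def)
  finally have "tv_dist (mpow Q k $ i) \<mu> \<le> C * \<rho>^k" .
  then show "\<bar>(mpow Q k *v y)$i\<bar> \<le> 2 * C * \<rho>^k * vnorm_inf y"
  proof -
    have "\<bar>(mpow Q k *v y)$i\<bar> \<le> 2 * tv_dist (mpow Q k $ i) \<mu> * vnorm_inf y" by (rule row_tv[OF assms(2)])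
    also have "\<dots> \<le> 2 * (C * \<rho>^k) * vnorm_inf y"
      using \<open>tv_dist (mpow Q k $ i) \<mu> \<le> C * \<rho>^k\<close> vn_nonneg[of y] by (intro mult_right_mono) auto
    finally show ?thesis by simp
  qed
qed

lemma tv_le: assumes "mixing_params Q \<mu> C \<rho>" shows "tv_dist (mpow Q k $ i) \<mu> \<le> C * \<rho>^k"
proof -
  have "tv_dist (mpow Q k $ i) \<mu> \<le> (MAX i\<in>UNIV. tv_dist (mpow Q k $ i) \<mu>)" by (rule Max_ge) auto
  also have "\<dots> \<le> C * \<rho>^k" using assms(1) by (simp add: mixing_params_def)
  finally show ?thesis .
qed



lemma norm_le_vn: "norm (x::real^'n) \<le> real CARD('n) * vnorm_inf x"
proof -
  have "norm x \<le> (\<Sum>i\<in>UNIV. \<bar>x$i\<bar>)" by (rule norm_le_l1_cart)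
  also have "\<dots> \<le> (\<Sum>i\<in>(UNIV::'n set). vnorm_inf x)" by (rule sum_mono) (rule vn_ge)
  finally show ?thesis by simp
qed

lemma summable_vn:
  fixes F :: "nat \<Rightarrow> real^'n"
  assumes "\<And>k. vnorm_inf (F k) \<le> b k" "summable b"
  shows "summable F"
proof (rule summable_comparison_test')
  show "summable (\<lambda>k. real CARD('n) * b k)" using assms(2) by (rule summable_mult)
  show "norm (F k) \<le> real CARD('n) * b k" for k
    using norm_le_vn[of "F k"] assms(1)[of k] by (smt (verit) mult_left_mono of_nat_0_le_iff)
qed

lemma vn_suminf:
  fixes F :: "nat \<Rightarrow> real^'n"
  assumes "summable F" "\<And>k. vnorm_inf (F k) \<le> b k" "summable b"
  shows "vnorm_inf (suminf F) \<le> suminf b"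
proof (rule vn_le)
  fix i
  have s: "summable (\<lambda>k. F k $ i)"
    using bounded_linear.summable[OF bounded_linear_vec_nth assms(1)] by simp
  have e: "suminf F $ i = (\<Sum>k. F k $ i)"
    using bounded_linear.suminf[OF bounded_linear_vec_nth assms(1)] by simp
  have b: "\<bar>F k $ i\<bar> \<le> b k" for k using vn_ge[of "F k" i] assms(2)[of k] by linarith
  have "(\<Sum>k. F k $ i) \<le> suminf b" by (rule suminf_le) (use b s assms(3) in \<open>auto simp: abs_le_iff\<close>)
  moreover have "(\<Sum>k. - b k) \<le> (\<Sum>k. F k $ i)"
  proof (rule suminf_le)
    show "- b k \<le> F k $ i" for k using b[of k] by linarith
  qed (use s assms(3) summable_minus in auto)
  moreover have "(\<Sum>k. - b k) = - suminf b" by (rule suminf_minus[OF assms(3)])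
  ultimately show "\<bar>suminf F $ i\<bar> \<le> suminf b" unfolding e by linarith
qed

lemma geo_summable: "0 < \<rho> \<Longrightarrow> \<rho> < (1::real) \<Longrightarrow> summable (\<lambda>k. a * \<rho>^k)"
  by (intro summable_mult summable_geometric) auto

lemma geo_suminf: "0 < \<rho> \<Longrightarrow> \<rho> < (1::real) \<Longrightarrow> (\<Sum>k. a * \<rho>^k) = a / (1 - \<rho>)"
  by (subst suminf_mult) (auto simp: suminf_geometric)

lemma mix_params_D: "mixing_params Q \<mu> C \<rho> \<Longrightarrow> 0 < C \<and> 0 < \<rho> \<and> \<rho> < 1"
  by (simp add: mixing_params_def)

lemma poisson_series:
  fixes \<mu> y :: "real^'n"
  assumes mix: "mixing_params Q \<mu> C \<rho>" and y: "\<mu> \<bullet> y = 0"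
  shows "summable (\<lambda>k. mpow Q k *v y)"
    "vnorm_inf (\<Sum>k. mpow Q k *v y) \<le> 2 * C * vnorm_inf y / (1 - \<rho>)"
    "(\<lambda>k. mpow Q k *v y) \<longlonglongrightarrow> 0"
proof -
  from mix_params_D[OF mix] have p: "0 < C" "0 < \<rho>" "\<rho> < 1" by auto
  have b: "vnorm_inf (mpow Q k *v y) \<le> (2 * C * vnorm_inf y) * \<rho>^k" for k
    using mix_bound[OF mix y, of k] by (simp add: mult_ac)
  show s: "summable (\<lambda>k. mpow Q k *v y)" by (rule summable_vn[OF b geo_summable[OF p(2,3)]])
  show "vnorm_inf (\<Sum>k. mpow Q k *v y) \<le> 2 * C * vnorm_inf y / (1 - \<rho>)"
    using vn_suminf[OF s b geo_summable[OF p(2,3)]] geo_suminf[OF p(2,3)] by simp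
  show "(\<lambda>k. mpow Q k *v y) \<longlonglongrightarrow> 0" by (rule summable_LIMSEQ_zero[OF s])
qed

lemma smv: "(c *\<^sub>R M) *v v = c *\<^sub>R (M *v (v::real^'n))"
  by (simp add: vec_eq_iff matrix_vector_mult_def sum_distrib_left mult.assoc)

lemma part1:
  fixes P :: "real^'n^'n" and \<mu> y :: "real^'n"
  assumes "stochastic P" "stationary_dist P \<mu>" "mixing_params (lazy P) \<mu> C \<rho>" "\<mu> \<bullet> y = 0"
  shows "summable (\<lambda>k. mpow (lazy P) k *v y)
       \<and> (mat 1 - P) *v ((\<Sum>k. mpow (lazy P) k *v y) /\<^sub>R 2) = y
       \<and> vnorm_inf ((\<Sum>k. mpow (lazy P) k *v y) /\<^sub>R 2) \<le> C / (1 - \<rho>) * vnorm_inf y"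
proof -
  let ?F = "\<lambda>k. mpow (lazy P) k *v y"
  note ps = poisson_series[OF assms(3,4)]
  from mix_params_D[OF assms(3)] have p: "0 < C" "0 < \<rho>" "\<rho> < 1" by auto
  have I: "mat 1 - P = 2 *\<^sub>R (mat 1 - lazy P)"
    unfolding lazy_def by (simp add: vec_eq_iff mat_def field_simps)
  have step: "(mat 1 - lazy P) *v ?F k = ?F k - ?F (Suc k)" for k
    by (simp only: matrix_vector_mult_diff_rdistrib mpow_Suc' matrix_vector_mul_assoc[symmetric] matrix_vector_mul_lid)
  have "(mat 1 - lazy P) *v suminf ?F = (\<Sum>k. (mat 1 - lazy P) *v ?F k)"
    by (rule bounded_linear.suminf[OF matrix_vector_mul_bounded_linear ps(1)])
  also have "\<dots> = (\<Sum>k. ?F k - ?F (Suc k))" by (simp only: step)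
  also have "\<dots> = ?F 0 - 0" by (rule sums_unique[symmetric], rule telescope_sums'[OF ps(3)])
  finally have t: "(mat 1 - lazy P) *v suminf ?F = y" by simp
  have "(mat 1 - P) *v (suminf ?F /\<^sub>R 2) = y"
    unfolding I using t by (simp add: matrix_vector_mult_scaleR smv)
  moreover have "vnorm_inf (suminf ?F /\<^sub>R 2) \<le> C / (1 - \<rho>) * vnorm_inf y"
    using ps(2) by (simp add: vn_scale mult_ac)
  ultimately show ?thesis using ps(1) by simp
qed



lemma coord_tv:
  fixes p q :: "real^'n"
  assumes "(\<Sum>j\<in>UNIV. p$j) = (\<Sum>j\<in>UNIV. q$j)"
  shows "\<bar>p$k - q$k\<bar> \<le> tv_dist p q"
proof -
  have s: "(\<Sum>j\<in>UNIV. p$j - q$j) = 0" using assms by (simp add: sum_subtractf)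
  have "(\<Sum>j\<in>UNIV. p$j - q$j) = (p$k - q$k) + (\<Sum>j\<in>UNIV-{k}. p$j - q$j)"
    by (subst sum.remove[of UNIV k]) auto
  then have e: "p$k - q$k = - (\<Sum>j\<in>UNIV-{k}. p$j - q$j)" using s by linarith
  have "\<bar>p$k - q$k\<bar> \<le> (\<Sum>j\<in>UNIV-{k}. \<bar>p$j - q$j\<bar>)" unfolding e abs_minus_cancel by (rule sum_abs)
  moreover have "(\<Sum>j\<in>UNIV. \<bar>p$j - q$j\<bar>) = \<bar>p$k - q$k\<bar> + (\<Sum>j\<in>UNIV-{k}. \<bar>p$j - q$j\<bar>)"
    by (subst sum.remove[of UNIV k]) auto
  ultimately show ?thesis unfolding tv_dist_def by linarith
qed

lemma stat_sum: "stationary_dist P \<mu> \<Longrightarrow> (\<Sum>j\<in>UNIV. \<mu>$j) = 1"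
  by (simp add: stationary_dist_def)

lemma lazy_entry_lb:
  assumes st: "stochastic P" and sd: "stationary_dist P \<mu>" and mix: "mixing_params (lazy P) \<mu> C \<rho>"
  shows "(lazy P)$j$k \<ge> 1/2 - 2 * (C * \<rho>)"
proof -
  have tv: "tv_dist (lazy P $ i) \<mu> \<le> C * \<rho>" for i using tv_le[OF mix, of 1 i] by (simp add: mpow_Suc)
  have rs: "(\<Sum>j\<in>UNIV. (lazy P)$i$j) = (\<Sum>j\<in>UNIV. \<mu>$j)" for i
    using stoch_rows[OF stoch_lazy[OF st]] stat_sum[OF sd] by simp
  have "\<bar>(lazy P)$j$k - \<mu>$k\<bar> \<le> C * \<rho>" using coord_tv[OF rs[of j], of k] tv[of j] by linarith
  moreover have "\<bar>(lazy P)$k$k - \<mu>$k\<bar> \<le> C * \<rho>" using coord_tv[OF rs[of k], of k] tv[of k] by linarith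
  moreover have "(lazy P)$k$k \<ge> 1/2" by (rule lazy_diag[OF st])
  ultimately show ?thesis by linarith
qed

lemma row_l1_min:
  fixes a b :: "real^'n"
  assumes "(\<Sum>j\<in>UNIV. a$j) = 1" "(\<Sum>j\<in>UNIV. b$j) = 1" "\<And>j. 0 \<le> a$j" "\<And>j. 0 \<le> b$j"
  shows "(\<Sum>j\<in>UNIV. \<bar>a$j - b$j\<bar>) \<le> 2 - 2 * min (a$k) (b$k)"
proof -
  have e: "\<bar>a$j - b$j\<bar> = a$j + b$j - 2 * min (a$j) (b$j)" for j by (simp add: min_def)
  have "(\<Sum>j\<in>UNIV. \<bar>a$j - b$j\<bar>) = 2 - 2 * (\<Sum>j\<in>UNIV. min (a$j) (b$j))"
    unfolding e by (simp add: sum.distrib sum_subtractf sum_distrib_left[symmetric] assms(1,2))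
  moreover have "min (a$k) (b$k) \<le> (\<Sum>j\<in>UNIV. min (a$j) (b$j))"
    by (rule member_le_sum) (use assms(3,4) in auto)
  ultimately show ?thesis by linarith
qed

lemma exists_other:
  assumes card: "CARD('n::finite) \<ge> 2" shows "\<exists>k::'n. k \<noteq> j"
proof (rule ccontr)
  assume "\<not> (\<exists>k::'n. k \<noteq> j)"
  then have "(UNIV::'n set) = {j}" by blast
  then have "card (UNIV::'n set) = card {j}" by (rule arg_cong)
  then show False using card by simp
qed

lemma eps_le:
  fixes P1 P2 :: "real^'n^'n"
  assumes st1: "stochastic P1" and sd1: "stationary_dist P1 \<mu>1" and m1: "mixing_params (lazy P1) \<mu>1 C1 \<rho>1"
    and st2: "stochastic P2" and sd2: "stationary_dist P2 \<mu>2" and m2: "mixing_params (lazy P2) \<mu>2 C2 \<rho>2"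
    and card: "CARD('n) \<ge> 2"
  shows "mnorm_inf (P1 - P2) \<le> 8 * (max C1 C2 * max \<rho>1 \<rho>2)"
proof (rule mn_le)
  fix j :: 'n
  define t where "t = max C1 C2 * max \<rho>1 \<rho>2"
  from m1 m2 have pos: "0 < C1" "0 < C2" "0 < \<rho>1" "0 < \<rho>2" by (auto simp: mixing_params_def)
  have t1: "C1 * \<rho>1 \<le> t" unfolding t_def by (rule mult_mono) (use pos in auto)
  have t2: "C2 * \<rho>2 \<le> t" unfolding t_def by (rule mult_mono) (use pos in auto)
  obtain k where k: "k \<noteq> j" using exists_other[OF card] by blast
  have l1: "(lazy P1)$j$k \<ge> 1/2 - 2 * (C1 * \<rho>1)" by (rule lazy_entry_lb[OF st1 sd1 m1])
  have l2: "(lazy P2)$j$k \<ge> 1/2 - 2 * (C2 * \<rho>2)" by (rule lazy_entry_lb[OF st2 sd2 m2])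
  have o1: "(lazy P1)$j$k = P1$j$k / 2" by (rule lazy_offdiag) (use k in auto)
  have o2: "(lazy P2)$j$k = P2$j$k / 2" by (rule lazy_offdiag) (use k in auto)
  have a: "P1$j$k \<ge> 1 - 4 * t" using l1 o1 t1 by linarith
  have b: "P2$j$k \<ge> 1 - 4 * t" using l2 o2 t2 by linarith
  have r1: "(\<Sum>l\<in>UNIV. P1$j$l) = 1" "(\<Sum>l\<in>UNIV. P2$j$l) = 1" using st1 st2 by (auto simp: stochastic_def)
  have r2: "\<And>l. 0 \<le> P1$j$l" "\<And>l. 0 \<le> P2$j$l" using st1 st2 by (auto simp: stochastic_def)
  have "(\<Sum>l\<in>UNIV. \<bar>(P1 - P2)$j$l\<bar>) = (\<Sum>l\<in>UNIV. \<bar>P1$j$l - P2$j$l\<bar>)" by simp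
  also have "\<dots> \<le> 2 - 2 * min (P1$j$k) (P2$j$k)"
    by (rule row_l1_min[OF r1 r2])
  also have "\<dots> \<le> 8 * t"
  proof -
    have "min (P1$j$k) (P2$j$k) \<ge> 1 - 4 * t" using a b by simp
    then show ?thesis by linarith
  qed
  finally show "(\<Sum>l\<in>UNIV. \<bar>(P1 - P2)$j$l\<bar>) \<le> 8 * (max C1 C2 * max \<rho>1 \<rho>2)" unfolding t_def .
qed

lemma eps_pos:
  fixes P1 P2 :: "real^'n^'n"
  assumes "P1 \<noteq> P2" shows "0 < mnorm_inf (P1 - P2)"
proof -
  obtain i j where ij: "P1$i$j \<noteq> P2$i$j" using assms by (auto simp: vec_eq_iff)
  have "0 < \<bar>(P1 - P2)$i$j\<bar>" using ij by simp
  also have "\<dots> \<le> (\<Sum>l\<in>UNIV. \<bar>(P1 - P2)$i$l\<bar>)" by (rule member_le_sum) auto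
  also have "\<dots> \<le> mnorm_inf (P1 - P2)" by (rule mn_ge)
  finally show ?thesis .
qed

lemma card_ge2:
  fixes P1 P2 :: "real^'n^'n"
  assumes "stochastic P1" "stochastic P2" "P1 \<noteq> P2"
  shows "CARD('n) \<ge> 2"
proof (rule ccontr)
  assume c: "\<not> CARD('n) \<ge> 2"
  have "P1$i$j = P2$i$j" for i j
  proof -
    have "\<not> (\<exists>k::'n. k \<noteq> i)"
    proof
      assume "\<exists>k::'n. k \<noteq> i"
      then obtain k where "k \<noteq> i" by blast
      then have "card {i, k} \<le> CARD('n)" by (intro card_mono) auto
      then show False using c \<open>k \<noteq> i\<close> by simp
    qed
    then have U: "\<And>k::'n. k = i" by blast
    have E: "(UNIV::'n set) - {i} = {}" using U by blast
    have "(\<Sum>l\<in>UNIV. P1$i$l) = P1$i$i" "(\<Sum>l\<in>UNIV. P2$i$l) = P2$i$i"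
      by (simp_all add: sum.remove[of UNIV i] E)
    then have "P1$i$i = 1" "P2$i$i = 1" using assms(1,2) by (auto simp: stochastic_def)
    then show ?thesis using U[of j] by simp
  qed
  then have "P1 = P2" by (simp add: vec_eq_iff)
  then show False using assms(3) by simp
qed

lemma vn_sum: "vnorm_inf (\<Sum>k\<in>A. F k) \<le> (\<Sum>k\<in>A. vnorm_inf (F k))"
proof (induction A rule: infinite_finite_induct)
  case (infinite A) then show ?case by (simp add: vnorm_inf_def)
next
  case empty then show ?case by (simp add: vnorm_inf_def)
next
  case (insert x B)
  have "vnorm_inf (\<Sum>k\<in>insert x B. F k) = vnorm_inf (F x + (\<Sum>k\<in>B. F k))" using insert by simp
  also have "\<dots> \<le> vnorm_inf (F x) + vnorm_inf (\<Sum>k\<in>B. F k)" by (rule vn_add)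
  also have "\<dots> \<le> vnorm_inf (F x) + (\<Sum>k\<in>B. vnorm_inf (F k))" using insert by simp
  also have "\<dots> = (\<Sum>k\<in>insert x B. vnorm_inf (F k))" using insert by simp
  finally show ?case .
qed

lemma head_term:
  fixes P1 P2 :: "real^'n^'n" and y1 y2 :: "real^'n"
  assumes "stochastic P1" "stochastic P2"
  shows "vnorm_inf (mpow (lazy P1) k *v y1 - mpow (lazy P2) k *v y2)
     \<le> vnorm_inf (y1 - y2) + k * (mnorm_inf (P1 - P2) / 4) * (vnorm_inf y1 + vnorm_inf y2)"
proof -
  define M1 where "M1 = mpow (lazy P1) k"
  define M2 where "M2 = mpow (lazy P2) k"
  have s1: "stochastic M1" "stochastic M2" unfolding M1_def M2_def using assms by (auto intro: stoch_mpow stoch_lazy)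
  have eq: "M1 *v y1 - M2 *v y2 = ((1/2) *\<^sub>R (M1 *v (y1 - y2)) + (1/2) *\<^sub>R (M2 *v (y1 - y2))) + (1/2) *\<^sub>R ((M1 - M2) *v (y1 + y2))"
    by (simp add: vec_eq_iff matrix_vector_mult_def sum_subtractf sum.distrib algebra_simps sum_divide_distrib[symmetric])
  have a: "vnorm_inf ((1/2) *\<^sub>R (M1 *v (y1 - y2))) \<le> (1/2) * vnorm_inf (y1 - y2)"
    using stoch_contract[OF s1(1)] by (simp add: vn_scale)
  have b: "vnorm_inf ((1/2) *\<^sub>R (M2 *v (y1 - y2))) \<le> (1/2) * vnorm_inf (y1 - y2)"
    using stoch_contract[OF s1(2)] by (simp add: vn_scale)
  have "mnorm_inf (M1 - M2) \<le> k * mnorm_inf (lazy P1 - lazy P2)"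
    unfolding M1_def M2_def by (rule mpow_diff_bound) (use assms in \<open>auto intro: stoch_lazy\<close>)
  then have mm: "mnorm_inf (M1 - M2) \<le> k * (mnorm_inf (P1 - P2) / 2)" by (simp add: mn_lazy_diff)
  have "vnorm_inf ((M1 - M2) *v (y1 + y2)) \<le> mnorm_inf (M1 - M2) * vnorm_inf (y1 + y2)" by (rule mv_bound)
  also have "\<dots> \<le> (k * (mnorm_inf (P1 - P2) / 2)) * (vnorm_inf y1 + vnorm_inf y2)"
    by (rule mult_mono[OF mm vn_add]) (auto intro!: vn_nonneg mn_nonneg mult_nonneg_nonneg)
  finally have c0: "vnorm_inf ((M1 - M2) *v (y1 + y2)) \<le> (k * (mnorm_inf (P1 - P2) / 2)) * (vnorm_inf y1 + vnorm_inf y2)" .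
  have c: "vnorm_inf ((1/2) *\<^sub>R ((M1 - M2) *v (y1 + y2))) \<le> k * (mnorm_inf (P1 - P2) / 4) * (vnorm_inf y1 + vnorm_inf y2)"
    using c0 by (simp add: vn_scale)
  have "vnorm_inf (M1 *v y1 - M2 *v y2) \<le> vnorm_inf ((1/2) *\<^sub>R (M1 *v (y1 - y2)) + (1/2) *\<^sub>R (M2 *v (y1 - y2))) + vnorm_inf ((1/2) *\<^sub>R ((M1 - M2) *v (y1 + y2)))"
    unfolding eq by (rule vn_add)
  also have "\<dots> \<le> ((1/2) * vnorm_inf (y1 - y2) + (1/2) * vnorm_inf (y1 - y2)) + k * (mnorm_inf (P1 - P2) / 4) * (vnorm_inf y1 + vnorm_inf y2)"
    by (rule add_mono[OF order_trans[OF vn_add add_mono[OF a b]] c])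
  finally show ?thesis unfolding M1_def M2_def by simp
qed



lemma powr_le_lin:
  fixes x f :: real
  assumes "0 < x" "0 \<le> f" "f \<le> 1"
  shows "x powr f \<le> 1 + f * (x - 1)"
proof -
  have "exp ((1 - f) *\<^sub>R 0 + f *\<^sub>R ln x) \<le> (1 - f) * exp 0 + f * exp (ln x)"
    by (rule convex_onD[OF exp_convex]) (use assms in auto)
  then show ?thesis using assms by (simp add: powr_def algebra_simps)
qed

lemma sum_nat_real: "(\<Sum>k<N. real k) = real N * (real N - 1) / 2"
  by (induction N) (auto simp: field_simps)

lemma final_real1:
  fixes f :: real and N :: nat
  assumes "N \<ge> 1" "0 \<le> f" "f < 1"
  shows "real N * (real N - 1) / 8 + (1 + 5 * f) / 4 \<le> (real N + f)^2 / 2"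
proof -
  define n where "n = real N"
  have n1: "n \<ge> 1" using assms unfolding n_def by simp
  have h1: "n * n \<ge> n" using n1 by (simp add: mult_le_cancel_left1)
  have h2: "n * f \<ge> f" using n1 assms(2) by (simp add: mult_le_cancel_right1)
  have h3: "f * f \<ge> 0" by simp
  have e: "(n + f)^2 / 2 - (n * (n - 1) / 8 + (1 + 5 * f) / 4) = (3 * (n * n) + n + 8 * (n * f) + 4 * (f * f) - 2 - 10 * f) / 8"
    by (simp add: power2_eq_square field_simps)
  have "0 \<le> 3 * (n * n) + n + 8 * (n * f) + 4 * (f * f) - 2 - 10 * f" using h1 h2 h3 n1 assms by linarith
  then have "0 \<le> (3 * (n * n) + n + 8 * (n * f) + 4 * (f * f) - 2 - 10 * f) / 8" by simp
  then show ?thesis using e unfolding n_def by linarith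
qed

lemma final_real2:
  fixes f :: real and N :: nat
  assumes "N \<ge> 1" "0 \<le> f" "f < 1"
  shows "real N * (real N - 1) / 8 + 1 / 2 \<le> (real N + f)^2 / 2"
proof -
  define n where "n = real N"
  have n1: "n \<ge> 1" using assms unfolding n_def by simp
  have h1: "n * n \<ge> n" using n1 by (simp add: mult_le_cancel_left1)
  have h2: "n * f \<ge> 0" using n1 assms(2) by simp
  have h3: "f * f \<ge> 0" by simp
  have e: "(n + f)^2 / 2 - (n * (n - 1) / 8 + 1 / 2) = (3 * (n * n) + n + 8 * (n * f) + 4 * (f * f) - 4) / 8"
    by (simp add: power2_eq_square field_simps)
  have "0 \<le> 3 * (n * n) + n + 8 * (n * f) + 4 * (f * f) - 4" using h1 h2 h3 n1 assms by linarith
  then have "0 \<le> (3 * (n * n) + n + 8 * (n * f) + 4 * (f * f) - 4) / 8" by simp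
  then show ?thesis using e unfolding n_def by linarith
qed

lemma tail_general:
  fixes P1 P2 :: "real^'n^'n" and \<mu>1 \<mu>2 y1 y2 :: "real^'n"
  assumes m1: "mixing_params (lazy P1) \<mu>1 C1 \<rho>1" and m2: "mixing_params (lazy P2) \<mu>2 C2 \<rho>2"
    and y1: "\<mu>1 \<bullet> y1 = 0" and y2: "\<mu>2 \<bullet> y2 = 0"
  shows "summable (\<lambda>k. mpow (lazy P1) (k + N) *v y1 - mpow (lazy P2) (k + N) *v y2)"
    "vnorm_inf (\<Sum>k. mpow (lazy P1) (k + N) *v y1 - mpow (lazy P2) (k + N) *v y2)
      \<le> 2 * max C1 C2 * (max \<rho>1 \<rho>2)^N * (vnorm_inf y1 + vnorm_inf y2) / (1 - max \<rho>1 \<rho>2)"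
proof -
  define C where "C = max C1 C2"
  define \<rho> where "\<rho> = max \<rho>1 \<rho>2"
  from m1 m2 have p: "0 < C1" "0 < C2" "0 < \<rho>1" "0 < \<rho>2" "\<rho>1 < 1" "\<rho>2 < 1" by (auto simp: mixing_params_def)
  then have pp: "0 < \<rho>" "\<rho> < 1" "0 < C" unfolding \<rho>_def C_def by auto
  have b1: "vnorm_inf (mpow (lazy P1) k *v y1) \<le> 2 * C * \<rho>^k * vnorm_inf y1" for k
  proof -
    have "2 * C1 * \<rho>1^k \<le> 2 * C * \<rho>^k" unfolding C_def \<rho>_def
      using p by (intro mult_mono power_mono) auto
    then show ?thesis using mix_bound[OF m1 y1, of k] vn_nonneg[of y1] by (meson mult_right_mono order_trans)
  qed
  have b2: "vnorm_inf (mpow (lazy P2) k *v y2) \<le> 2 * C * \<rho>^k * vnorm_inf y2" for k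
  proof -
    have "2 * C2 * \<rho>2^k \<le> 2 * C * \<rho>^k" unfolding C_def \<rho>_def
      using p by (intro mult_mono power_mono) auto
    then show ?thesis using mix_bound[OF m2 y2, of k] vn_nonneg[of y2] by (meson mult_right_mono order_trans)
  qed
  let ?S = "vnorm_inf y1 + vnorm_inf y2"
  have b: "vnorm_inf (mpow (lazy P1) (k + N) *v y1 - mpow (lazy P2) (k + N) *v y2) \<le> (2 * C * \<rho>^N * ?S) * \<rho>^k" for k
  proof -
    have "vnorm_inf (mpow (lazy P1) (k + N) *v y1 - mpow (lazy P2) (k + N) *v y2)
        \<le> 2 * C * \<rho>^(k+N) * vnorm_inf y1 + 2 * C * \<rho>^(k+N) * vnorm_inf y2"
      using vn_diff b1[of "k+N"] b2[of "k+N"] by (meson add_mono order_trans)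
    also have "\<dots> = (2 * C * \<rho>^N * ?S) * \<rho>^k" by (simp add: power_add algebra_simps)
    finally show ?thesis .
  qed
  show s: "summable (\<lambda>k. mpow (lazy P1) (k + N) *v y1 - mpow (lazy P2) (k + N) *v y2)"
    by (rule summable_vn[OF b geo_summable[OF pp(1,2)]])
  have "vnorm_inf (\<Sum>k. mpow (lazy P1) (k + N) *v y1 - mpow (lazy P2) (k + N) *v y2) \<le> (\<Sum>k. (2 * C * \<rho>^N * ?S) * \<rho>^k)"
    by (rule vn_suminf[OF s b geo_summable[OF pp(1,2)]])
  also have "\<dots> = 2 * C * \<rho>^N * ?S / (1 - \<rho>)" by (rule geo_suminf[OF pp(1,2)])
  finally show "vnorm_inf (\<Sum>k. mpow (lazy P1) (k + N) *v y1 - mpow (lazy P2) (k + N) *v y2)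
      \<le> 2 * max C1 C2 * (max \<rho>1 \<rho>2)^N * (vnorm_inf y1 + vnorm_inf y2) / (1 - max \<rho>1 \<rho>2)"
    unfolding C_def \<rho>_def .
qed

lemma head_sum:
  fixes P1 P2 :: "real^'n^'n" and y1 y2 :: "real^'n"
  assumes "stochastic P1" "stochastic P2"
  shows "vnorm_inf (\<Sum>k<N. mpow (lazy P1) k *v y1 - mpow (lazy P2) k *v y2)
     \<le> real N * vnorm_inf (y1 - y2) + mnorm_inf (P1 - P2) * (vnorm_inf y1 + vnorm_inf y2) * (real N * (real N - 1) / 8)"
proof -
  have "vnorm_inf (\<Sum>k<N. mpow (lazy P1) k *v y1 - mpow (lazy P2) k *v y2)
     \<le> (\<Sum>k<N. vnorm_inf (mpow (lazy P1) k *v y1 - mpow (lazy P2) k *v y2))" by (rule vn_sum)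
  also have "\<dots> \<le> (\<Sum>k<N. vnorm_inf (y1 - y2) + real k * (mnorm_inf (P1 - P2) / 4) * (vnorm_inf y1 + vnorm_inf y2))"
    by (rule sum_mono) (rule head_term[OF assms])
  also have "\<dots> = real N * vnorm_inf (y1 - y2) + (mnorm_inf (P1 - P2) / 4) * (vnorm_inf y1 + vnorm_inf y2) * (\<Sum>k<N. real k)"
  proof -
    define c where "c = (mnorm_inf (P1 - P2) / 4) * (vnorm_inf y1 + vnorm_inf y2)"
    have "(\<Sum>k<N. vnorm_inf (y1 - y2) + real k * (mnorm_inf (P1 - P2) / 4) * (vnorm_inf y1 + vnorm_inf y2))
        = (\<Sum>k<N. vnorm_inf (y1 - y2) + c * real k)" unfolding c_def by (simp add: mult_ac)
    also have "\<dots> = real N * vnorm_inf (y1 - y2) + c * (\<Sum>k<N. real k)"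
      by (simp add: sum.distrib sum_distrib_left)
    finally show ?thesis unfolding c_def .
  qed
  also have "\<dots> = real N * vnorm_inf (y1 - y2) + mnorm_inf (P1 - P2) * (vnorm_inf y1 + vnorm_inf y2) * (real N * (real N - 1) / 8)"
    by (simp add: sum_nat_real)
  finally show ?thesis .
qed



lemma two_elems:
  assumes "CARD('n::finite) = 2"
  shows "\<exists>a b::'n. a \<noteq> b \<and> (UNIV::'n set) = {a, b}"
  using assms by (metis card_2_iff)

lemma sum2:
  assumes "a \<noteq> b" "(UNIV::'n::finite set) = {a, b}"
  shows "(\<Sum>j\<in>UNIV. h j) = h a + h (b::'n)"
proof -
  have "(\<Sum>j\<in>UNIV. h j) = (\<Sum>j\<in>{a,b}. h j)" by (subst assms(2)) (rule refl)
  then show ?thesis using assms(1) by simp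
qed

lemma d2_eigen:
  fixes P :: "real^'n^'n" and \<mu> y :: "real^'n"
  assumes ab: "a \<noteq> b" "(UNIV::'n set) = {a, b}"
    and st: "stochastic P" and sd: "stationary_dist P \<mu>" and y: "\<mu> \<bullet> y = 0"
  shows "lazy P *v y = (1 - (P$a$b + P$b$a) / 2) *\<^sub>R y"
proof -
  let ?p = "P$a$b" and ?q = "P$b$a"
  note S2 = sum2[OF ab]
  have ra: "P$a$a + ?p = 1" using st S2[of "\<lambda>j. P$a$j"] by (simp add: stochastic_def)
  have rb: "?q + P$b$b = 1" using st S2[of "\<lambda>j. P$b$j"] by (simp add: stochastic_def)
  have mu1: "\<mu>$a + \<mu>$b = 1" using sd S2[of "\<lambda>j. \<mu>$j"] by (simp add: stationary_dist_def)
  have "(\<mu> v* P)$b = \<mu>$b" using sd by (simp add: stationary_dist_def)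
  then have "\<mu>$a * ?p + \<mu>$b * P$b$b = \<mu>$b" using S2[of "\<lambda>i. \<mu>$i * P$i$b"] by (simp add: vector_matrix_mult_def)
  moreover have bb: "P$b$b = 1 - ?q" using rb by simp
  ultimately have "\<mu>$a * ?p + \<mu>$b * (1 - ?q) = \<mu>$b" by simp
  then have stat: "\<mu>$a * ?p = \<mu>$b * ?q" by (simp add: algebra_simps)
  have yy: "\<mu>$a * y$a + \<mu>$b * y$b = 0" using y S2[of "\<lambda>i. \<mu>$i * y$i"] by (simp add: inner_vec_def)
  have key: "?q * y$a + ?p * y$b = 0"
  proof -
    have e1: "\<mu>$a * (?q * y$a + ?p * y$b) = ?q * (\<mu>$a * y$a + \<mu>$b * y$b)"
      using stat by (simp add: algebra_simps, (metis mult.commute mult.left_commute)?)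
    have e2: "\<mu>$b * (?q * y$a + ?p * y$b) = ?p * (\<mu>$a * y$a + \<mu>$b * y$b)"
      using stat by (simp add: algebra_simps, (metis mult.commute mult.left_commute)?)
    have z1: "\<mu>$a * (?q * y$a + ?p * y$b) = 0" using e1 yy by simp
    have z2: "\<mu>$b * (?q * y$a + ?p * y$b) = 0" using e2 yy by simp
    have "(\<mu>$a + \<mu>$b) * (?q * y$a + ?p * y$b) = 0" by (simp only: distrib_right z1 z2)
    then show ?thesis using mu1 by simp
  qed
  have "(P *v y)$i = (1 - ?p - ?q) * y$i" for i
  proof -
    have "i = a \<or> i = b" using ab by auto
    then show ?thesis
    proof
      assume i: "i = a"
      have "(P *v y)$a = P$a$a * y$a + ?p * y$b" using S2[of "\<lambda>j. P$a$j * y$j"] by (simp add: matrix_vector_mult_def)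
      also have "\<dots> = (1 - ?p) * y$a + ?p * y$b" using ra by (simp add: eq_diff_eq[symmetric])
      also have "\<dots> = (1 - ?p - ?q) * y$a + (?q * y$a + ?p * y$b)" by algebra
      also have "\<dots> = (1 - ?p - ?q) * y$a" using key by simp
      finally show ?thesis using i by simp
    next
      assume i: "i = b"
      have "(P *v y)$b = ?q * y$a + P$b$b * y$b" using S2[of "\<lambda>j. P$b$j * y$j"] by (simp add: matrix_vector_mult_def)
      also have "\<dots> = ?q * y$a + (1 - ?q) * y$b" using rb by (simp add: eq_diff_eq[symmetric] add.commute)
      also have "\<dots> = (1 - ?p - ?q) * y$b + (?q * y$a + ?p * y$b)" by algebra
      also have "\<dots> = (1 - ?p - ?q) * y$b" using key by simp
      finally show ?thesis using i by simp
    qed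
  qed
  then have "(lazy P *v y)$i = ((1 - (?p + ?q) / 2) *\<^sub>R y)$i" for i
  proof -
    have "(lazy P *v y)$i = ((P *v y)$i + y$i) / 2"
      by (simp add: lazy_def smv matrix_vector_mult_add_rdistrib)
    also have "\<dots> = ((1 - ?p - ?q) * y$i + y$i) / 2" using \<open>\<And>i. (P *v y)$i = (1 - ?p - ?q) * y$i\<close> by simp
    also have "\<dots> = ((1 - (?p + ?q) / 2) *\<^sub>R y)$i" by (simp add: field_simps)
    finally show ?thesis .
  qed
  then show ?thesis by (simp add: vec_eq_iff)
qed


lemma d2_pow:
  fixes P :: "real^'n^'n" and \<mu> y :: "real^'n"
  assumes ab: "a \<noteq> b" "(UNIV::'n set) = {a, b}"
    and st: "stochastic P" and sd: "stationary_dist P \<mu>" and y: "\<mu> \<bullet> y = 0"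
  shows "mpow (lazy P) k *v y = (1 - (P$a$b + P$b$a) / 2)^k *\<^sub>R y"
proof (induction k)
  case 0 then show ?case by simp
next
  case (Suc k)
  have "mpow (lazy P) (Suc k) *v y = lazy P *v (mpow (lazy P) k *v y)"
    by (simp add: mpow_Suc' matrix_vector_mul_assoc)
  also have "\<dots> = (1 - (P$a$b + P$b$a) / 2)^k *\<^sub>R (lazy P *v y)"
    by (simp add: Suc matrix_vector_mult_scaleR)
  also have "\<dots> = (1 - (P$a$b + P$b$a) / 2)^Suc k *\<^sub>R y"
    by (simp add: d2_eigen[OF ab st sd y])
  finally show ?case .
qed

lemma d2_range:
  fixes P :: "real^'n^'n"
  assumes ab: "a \<noteq> b" "(UNIV::'n set) = {a, b}" and st: "stochastic P"
  shows "0 \<le> 1 - (P$a$b + P$b$a) / 2" "1 - (P$a$b + P$b$a) / 2 \<le> 1"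
proof -
  note S2 = sum2[OF ab]
  have ra: "P$a$a + P$a$b = 1" using st S2[of "\<lambda>j. P$a$j"] by (simp add: stochastic_def)
  have rb: "P$b$a + P$b$b = 1" using st S2[of "\<lambda>j. P$b$j"] by (simp add: stochastic_def)
  have nn: "0 \<le> P$a$a" "0 \<le> P$a$b" "0 \<le> P$b$a" "0 \<le> P$b$b" using st by (auto simp: stochastic_def)
  have "P$a$b \<le> 1" "P$b$a \<le> 1" using ra rb nn by linarith+
  then show "0 \<le> 1 - (P$a$b + P$b$a) / 2" by simp
  show "1 - (P$a$b + P$b$a) / 2 \<le> 1" using nn by simp
qed

lemma d2_mu:
  fixes P :: "real^'n^'n" and \<mu> :: "real^'n"
  assumes ab: "a \<noteq> b" "(UNIV::'n set) = {a, b}" and sd: "stationary_dist P \<mu>"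
  shows "\<mu>$a + \<mu>$b = 1" "0 \<le> \<mu>$a" "0 \<le> \<mu>$b"
  using sd sum2[OF ab, of "\<lambda>j. \<mu>$j"] by (auto simp: stationary_dist_def)

lemma d2_theta_le:
  fixes P :: "real^'n^'n" and \<mu> :: "real^'n"
  assumes ab: "a \<noteq> b" "(UNIV::'n set) = {a, b}"
    and st: "stochastic P" and sd: "stationary_dist P \<mu>" and mix: "mixing_params (lazy P) \<mu> C \<rho>"
  shows "1 - (P$a$b + P$b$a) / 2 \<le> \<rho>"
proof (rule ccontr)
  define \<theta> where "\<theta> = 1 - (P$a$b + P$b$a) / 2"
  assume "\<not> (1 - (P$a$b + P$b$a) / 2 \<le> \<rho>)"
  then have gt: "\<theta> > \<rho>" unfolding \<theta>_def by simp
  from mix have p: "0 < C" "0 < \<rho>" by (auto simp: mixing_params_def)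
  have th0: "0 \<le> \<theta>" unfolding \<theta>_def by (rule d2_range[OF ab st])
  define v where "v = (\<chi> j. if j = a then \<mu>$b else - \<mu>$a)"
  note mu = d2_mu[OF ab sd]
  have va: "v$a = \<mu>$b" and vb: "v$b = - \<mu>$a" unfolding v_def using ab by auto
  have v0: "\<mu> \<bullet> v = 0" using sum2[OF ab, of "\<lambda>i. \<mu>$i * v$i"] va vb by (simp add: inner_vec_def)
  have "\<bar>v$a\<bar> \<le> vnorm_inf v" "\<bar>v$b\<bar> \<le> vnorm_inf v" by (rule vn_ge)+
  then have vpos: "0 < vnorm_inf v" using va vb mu by linarith
  have "\<theta>^k \<le> 2 * C * \<rho>^k" for k
  proof -
    have "vnorm_inf (mpow (lazy P) k *v v) \<le> 2 * C * \<rho>^k * vnorm_inf v" by (rule mix_bound[OF mix v0])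
    moreover have "mpow (lazy P) k *v v = \<theta>^k *\<^sub>R v" unfolding \<theta>_def by (rule d2_pow[OF ab st sd v0])
    ultimately have "\<theta>^k * vnorm_inf v \<le> 2 * C * \<rho>^k * vnorm_inf v" using th0 by (simp add: vn_scale)
    then show ?thesis using vpos by simp
  qed
  moreover obtain k where "2 * C < (\<theta> / \<rho>)^k" using real_arch_pow[of "\<theta> / \<rho>" "2 * C"] gt p by auto
  moreover have "(\<theta> / \<rho>)^k = \<theta>^k / \<rho>^k" by (rule power_divide)
  moreover have "0 < \<rho>^k" using p by simp
  ultimately have "2 * C * \<rho>^k < \<theta>^k" \<open>\<theta>^k \<le> 2 * C * \<rho>^k\<close>
    by (auto simp: pos_less_divide_eq)
  then show False by linarith
qed

lemma d2_C:
  fixes P :: "real^'n^'n" and \<mu> :: "real^'n"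
  assumes ab: "a \<noteq> b" "(UNIV::'n set) = {a, b}"
    and sd: "stationary_dist P \<mu>" and mix: "mixing_params (lazy P) \<mu> C \<rho>"
  shows "C \<ge> 1/2"
proof -
  note mu = d2_mu[OF ab sd]
  have ta: "tv_dist (mat 1 $ a) \<mu> \<le> C" using tv_le[OF mix, of 0 a] by simp
  have tb: "tv_dist (mat 1 $ b) \<mu> \<le> C" using tv_le[OF mix, of 0 b] by simp
  have "tv_dist (mat 1 $ a) \<mu> = (\<bar>1 - \<mu>$a\<bar> + \<bar>0 - \<mu>$b\<bar>) / 2"
    using sum2[OF ab, of "\<lambda>j. \<bar>(mat 1 $ a :: real^'n)$j - \<mu>$j\<bar>"] ab by (simp add: tv_dist_def mat_def)
  also have "\<dots> = \<mu>$b" using mu by simp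
  finally have "\<mu>$b \<le> C" using ta by simp
  have "tv_dist (mat 1 $ b) \<mu> = (\<bar>0 - \<mu>$a\<bar> + \<bar>1 - \<mu>$b\<bar>) / 2"
    using sum2[OF ab, of "\<lambda>j. \<bar>(mat 1 $ b :: real^'n)$j - \<mu>$j\<bar>"] ab by (simp add: tv_dist_def mat_def)
  also have "\<dots> = \<mu>$a" using mu by simp
  finally have "\<mu>$a \<le> C" using tb by simp
  then show ?thesis using \<open>\<mu>$b \<le> C\<close> mu by linarith
qed

lemma d2_theta_diff:
  fixes P1 P2 :: "real^'n^'n"
  assumes ab: "a \<noteq> b" "(UNIV::'n set) = {a, b}" and st1: "stochastic P1" and st2: "stochastic P2"
  shows "\<bar>(1 - (P1$a$b + P1$b$a) / 2) - (1 - (P2$a$b + P2$b$a) / 2)\<bar> \<le> mnorm_inf (P1 - P2) / 2"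
proof -
  note S2 = sum2[OF ab]
  have ra1: "P1$a$a + P1$a$b = 1" using st1 S2[of "\<lambda>j. P1$a$j"] by (simp add: stochastic_def)
  have rb1: "P1$b$a + P1$b$b = 1" using st1 S2[of "\<lambda>j. P1$b$j"] by (simp add: stochastic_def)
  have ra2: "P2$a$a + P2$a$b = 1" using st2 S2[of "\<lambda>j. P2$a$j"] by (simp add: stochastic_def)
  have rb2: "P2$b$a + P2$b$b = 1" using st2 S2[of "\<lambda>j. P2$b$j"] by (simp add: stochastic_def)
  have "(\<Sum>j\<in>UNIV. \<bar>(P1 - P2)$a$j\<bar>) \<le> mnorm_inf (P1 - P2)" by (rule mn_ge)
  then have ea: "\<bar>P1$a$a - P2$a$a\<bar> + \<bar>P1$a$b - P2$a$b\<bar> \<le> mnorm_inf (P1 - P2)"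
    using S2[of "\<lambda>j. \<bar>(P1 - P2)$a$j\<bar>"] by simp
  have "(\<Sum>j\<in>UNIV. \<bar>(P1 - P2)$b$j\<bar>) \<le> mnorm_inf (P1 - P2)" by (rule mn_ge)
  then have eb: "\<bar>P1$b$a - P2$b$a\<bar> + \<bar>P1$b$b - P2$b$b\<bar> \<le> mnorm_inf (P1 - P2)"
    using S2[of "\<lambda>j. \<bar>(P1 - P2)$b$j\<bar>"] by simp
  have "\<bar>P1$a$a - P2$a$a\<bar> = \<bar>P1$a$b - P2$a$b\<bar>" using ra1 ra2 by linarith
  moreover have "\<bar>P1$b$b - P2$b$b\<bar> = \<bar>P1$b$a - P2$b$a\<bar>" using rb1 rb2 by linarith
  ultimately have h1: "\<bar>P1$a$b - P2$a$b\<bar> \<le> mnorm_inf (P1 - P2) / 2" "\<bar>P1$b$a - P2$b$a\<bar> \<le> mnorm_inf (P1 - P2) / 2"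
    using ea eb by linarith+
  define t1 where "t1 = 1 - (P1$a$b + P1$b$a) / 2"
  define t2 where "t2 = 1 - (P2$a$b + P2$b$a) / 2"
  have e2: "2 * (t1 - t2) = (P2$a$b - P1$a$b) + (P2$b$a - P1$b$a)" unfolding t1_def t2_def by (simp add: field_simps)
  define m where "m = mnorm_inf (P1 - P2)"
  have A: "2 * \<bar>P1$a$b - P2$a$b\<bar> \<le> m" "2 * \<bar>P1$b$a - P2$b$a\<bar> \<le> m"
    using h1 unfolding m_def by (simp_all add: field_simps)
  have "2 * \<bar>t1 - t2\<bar> \<le> m" using e2 A by (simp add: abs_if split: if_splits) linarith?
  then have "\<bar>t1 - t2\<bar> \<le> mnorm_inf (P1 - P2) / 2" unfolding m_def by (simp add: field_simps)
  then show ?thesis unfolding t1_def t2_def .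
qed

lemma pow_lip:
  fixes x z :: real
  assumes "0 \<le> x" "x \<le> 1/6" "0 \<le> z" "z \<le> 1/6"
  shows "\<bar>x^Suc m - z^Suc m\<bar> \<le> \<bar>x - z\<bar>"
proof (induction m)
  case 0 then show ?case by simp
next
  case (Suc m)
  have e: "x^Suc (Suc m) - z^Suc (Suc m) = x * (x^Suc m - z^Suc m) + z^Suc m * (x - z)"
    by (simp add: algebra_simps)
  have "z^m \<le> 1" by (rule power_le_one) (use assms in auto)
  then have "z * z^m \<le> z * 1" using assms by (intro mult_left_mono) auto
  then have zm: "z^Suc m \<le> 1/6" using assms by simp
  have zm0: "0 \<le> z^Suc m" using assms by simp
  have "\<bar>x * (x^Suc m - z^Suc m)\<bar> \<le> (1/6) * \<bar>x - z\<bar>"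
    unfolding abs_mult using assms Suc by (intro mult_mono) auto
  moreover have "\<bar>z^Suc m * (x - z)\<bar> \<le> (1/6) * \<bar>x - z\<bar>"
    unfolding abs_mult using zm zm0 by (intro mult_right_mono) auto
  ultimately show ?case unfolding e
    using abs_triangle_ineq[of "x * (x^Suc m - z^Suc m)" "z^Suc m * (x - z)"] abs_ge_zero[of "x - z"] by linarith
qed

lemma g_lip:
  fixes x z :: real
  assumes "0 \<le> x" "x \<le> 1/6" "0 \<le> z" "z \<le> 1/6" "N \<ge> 1"
  shows "\<bar>x^N / (1 - x) - z^N / (1 - z)\<bar> \<le> 36/25 * \<bar>x - z\<bar>"
proof -
  obtain m where m: "N = Suc m" using assms(5) by (cases N) auto
  have x1: "0 < 1 - x" and z1: "0 < 1 - z" using assms by auto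
  have e1: "z^N * (x - z) / ((1-x)*(1-z)) = z^N/(1-x) - z^N/(1-z)" using x1 z1 by (simp add: field_simps)
  have e: "x^N / (1 - x) - z^N / (1 - z) = (x^N - z^N) / (1 - x) + z^N * (x - z) / ((1 - x) * (1 - z))"
    unfolding e1 by (simp add: diff_divide_distrib)
  have a: "\<bar>(x^N - z^N) / (1 - x)\<bar> \<le> \<bar>x - z\<bar> * (6/5)"
  proof -
    have "\<bar>(x^N - z^N) / (1 - x)\<bar> = \<bar>x^N - z^N\<bar> * (1 / (1 - x))" using x1 by (simp add: abs_div)
    also have "\<dots> \<le> \<bar>x - z\<bar> * (6/5)"
    proof (rule mult_mono)
      show "\<bar>x^N - z^N\<bar> \<le> \<bar>x - z\<bar>" unfolding m by (rule pow_lip[OF assms(1-4)])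
      show "1 / (1 - x) \<le> 6/5" using assms x1 by (simp add: field_simps)
    qed (use assms in auto)
    finally show ?thesis .
  qed
  have zN: "z^N \<le> 1/6"
  proof -
    have "z^m \<le> 1" by (rule power_le_one) (use assms in auto)
    then have "z * z^m \<le> z * 1" using assms by (intro mult_left_mono) auto
    then show ?thesis unfolding m using assms by simp
  qed
  have b: "\<bar>z^N * (x - z) / ((1 - x) * (1 - z))\<bar> \<le> \<bar>x - z\<bar> * (6/25)"
  proof -
    have "\<bar>z^N * (x - z) / ((1 - x) * (1 - z))\<bar> = \<bar>x - z\<bar> * (z^N * (1 / (1 - x)) * (1 / (1 - z)))"
      using x1 z1 assms by (simp add: abs_div abs_mult)
    also have "\<dots> \<le> \<bar>x - z\<bar> * ((1/6) * (6/5) * (6/5))"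
    proof (rule mult_left_mono)
      have "1 / (1 - x) \<le> 6/5" "1 / (1 - z) \<le> 6/5" using assms x1 z1 by (simp_all add: field_simps)
      then show "z^N * (1 / (1 - x)) * (1 / (1 - z)) \<le> (1/6) * (6/5) * (6/5)"
        using zN assms x1 z1 by (intro mult_mono) auto
    qed auto
    finally show ?thesis by simp
  qed
  show ?thesis unfolding e using a b abs_triangle_ineq[of "(x^N - z^N) / (1 - x)" "z^N * (x - z) / ((1 - x) * (1 - z))"]
    by linarith
qed

lemma d2_facts:
  fixes P1 P2 :: "real^'n^'n" and \<mu>1 \<mu>2 y1 y2 :: "real^'n"
  assumes card: "CARD('n) = 2"
    and st1: "stochastic P1" and sd1: "stationary_dist P1 \<mu>1" and m1: "mixing_params (lazy P1) \<mu>1 C1 \<rho>1"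
    and st2: "stochastic P2" and sd2: "stationary_dist P2 \<mu>2" and m2: "mixing_params (lazy P2) \<mu>2 C2 \<rho>2"
    and y1: "\<mu>1 \<bullet> y1 = 0" and y2: "\<mu>2 \<bullet> y2 = 0" and small: "max \<rho>1 \<rho>2 < 1/6" and N: "N \<ge> 1"
  shows "vnorm_inf (\<Sum>k. mpow (lazy P1) (k + N) *v y1 - mpow (lazy P2) (k + N) *v y2)
           \<le> (max \<rho>1 \<rho>2)^N / (1 - max \<rho>1 \<rho>2) * vnorm_inf (y1 - y2) + 9/25 * mnorm_inf (P1 - P2) * (vnorm_inf y1 + vnorm_inf y2)"
    "vnorm_inf (\<Sum>k. mpow (lazy P1) (k + N) *v y1 - mpow (lazy P2) (k + N) *v y2)
           \<le> (max \<rho>1 \<rho>2)^N / (1 - max \<rho>1 \<rho>2) * (vnorm_inf y1 + vnorm_inf y2)"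
    "max C1 C2 \<ge> 1/2"
proof -
  obtain a b :: 'n where ab: "a \<noteq> b" "(UNIV::'n set) = {a, b}" using two_elems[OF card] by blast
  define \<rho> where "\<rho> = max \<rho>1 \<rho>2"
  define t1 where "t1 = 1 - (P1$a$b + P1$b$a) / 2"
  define t2 where "t2 = 1 - (P2$a$b + P2$b$a) / 2"
  from m1 m2 have p0: "0 < \<rho>1" "0 < \<rho>2" by (auto simp: mixing_params_def)
  have rp: "0 < \<rho>" "\<rho> < 1/6" using p0 small unfolding \<rho>_def by auto
  have t1r: "0 \<le> t1" "t1 \<le> \<rho>" unfolding t1_def \<rho>_def
    using d2_range(1)[OF ab st1] d2_theta_le[OF ab st1 sd1 m1] by auto
  have t2r: "0 \<le> t2" "t2 \<le> \<rho>" unfolding t2_def \<rho>_def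
    using d2_range(1)[OF ab st2] d2_theta_le[OF ab st2 sd2 m2] by auto
  have pw1: "mpow (lazy P1) k *v y1 = t1^k *\<^sub>R y1" for k unfolding t1_def by (rule d2_pow[OF ab st1 sd1 y1])
  have pw2: "mpow (lazy P2) k *v y2 = t2^k *\<^sub>R y2" for k unfolding t2_def by (rule d2_pow[OF ab st2 sd2 y2])
  define g1 where "g1 = t1^N / (1 - t1)"
  define g2 where "g2 = t2^N / (1 - t2)"
  define g where "g = \<rho>^N / (1 - \<rho>)"
  have gs: "(\<lambda>k. t^(k + N)) sums (t^N / (1 - t))" if "0 \<le> t" "t < 1" for t :: real
  proof -
    have "(\<lambda>k. t^N * t^k) sums (t^N * (1 / (1 - t)))"
      by (rule sums_mult[OF geometric_sums]) (use that in auto)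
    then show ?thesis by (simp add: power_add mult.commute)
  qed
  have s1: "(\<lambda>k. t1^(k + N)) sums g1" unfolding g1_def by (rule gs) (use t1r rp in auto)
  have s2: "(\<lambda>k. t2^(k + N)) sums g2" unfolding g2_def by (rule gs) (use t2r rp in auto)
  have "(\<lambda>k. t1^(k + N) *\<^sub>R y1 - t2^(k + N) *\<^sub>R y2) sums (g1 *\<^sub>R y1 - g2 *\<^sub>R y2)"
    by (rule sums_diff[OF sums_scaleR_left[OF s1] sums_scaleR_left[OF s2]])
  then have eqs: "(\<Sum>k. mpow (lazy P1) (k + N) *v y1 - mpow (lazy P2) (k + N) *v y2) = g1 *\<^sub>R y1 - g2 *\<^sub>R y2"
    unfolding pw1 pw2 by (rule sums_unique[symmetric])
  have gle: "g1 \<le> g" "g2 \<le> g" unfolding g1_def g2_def g_def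
    using t1r t2r rp by (auto intro!: frac_le power_mono)
  have g0: "0 \<le> g1" "0 \<le> g2" unfolding g1_def g2_def using t1r t2r rp by auto
  have "vnorm_inf (g1 *\<^sub>R y1 - g2 *\<^sub>R y2) \<le> g1 * vnorm_inf y1 + g2 * vnorm_inf y2"
    using vn_diff[of "g1 *\<^sub>R y1" "g2 *\<^sub>R y2"] g0 by (simp add: vn_scale)
  also have "\<dots> \<le> g * vnorm_inf y1 + g * vnorm_inf y2"
    using gle by (intro add_mono mult_right_mono vn_nonneg) auto
  finally show "vnorm_inf (\<Sum>k. mpow (lazy P1) (k + N) *v y1 - mpow (lazy P2) (k + N) *v y2)
           \<le> (max \<rho>1 \<rho>2)^N / (1 - max \<rho>1 \<rho>2) * (vnorm_inf y1 + vnorm_inf y2)"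
    unfolding eqs g_def \<rho>_def by (simp add: distrib_left)
  have lip: "\<bar>g1 - g2\<bar> \<le> 36/25 * \<bar>t1 - t2\<bar>" unfolding g1_def g2_def
    by (rule g_lip) (use t1r t2r rp N in auto)
  have td: "\<bar>t1 - t2\<bar> \<le> mnorm_inf (P1 - P2) / 2" unfolding t1_def t2_def by (rule d2_theta_diff[OF ab st1 st2])
  have dif: "\<bar>(g1 - g2) / 2\<bar> \<le> 9/25 * mnorm_inf (P1 - P2)" using lip td by (simp add: field_simps)
  have sm: "\<bar>(g1 + g2) / 2\<bar> \<le> g" using g0 gle by simp
  have veq: "g1 *\<^sub>R y1 - g2 *\<^sub>R y2 = ((g1 + g2) / 2) *\<^sub>R (y1 - y2) + ((g1 - g2) / 2) *\<^sub>R (y1 + y2)"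
    by (simp add: vec_eq_iff field_simps)
  have "vnorm_inf (g1 *\<^sub>R y1 - g2 *\<^sub>R y2) \<le> \<bar>(g1 + g2) / 2\<bar> * vnorm_inf (y1 - y2) + \<bar>(g1 - g2) / 2\<bar> * vnorm_inf (y1 + y2)"
    unfolding veq using vn_add[of "((g1 + g2) / 2) *\<^sub>R (y1 - y2)" "((g1 - g2) / 2) *\<^sub>R (y1 + y2)"]
    by (simp only: vn_scale)
  also have "\<dots> \<le> g * vnorm_inf (y1 - y2) + 9/25 * mnorm_inf (P1 - P2) * (vnorm_inf y1 + vnorm_inf y2)"
    using sm dif vn_add[of y1 y2] mn_nonneg[of "P1 - P2"] by (intro add_mono mult_mono) (auto intro: vn_nonneg)
  finally show "vnorm_inf (\<Sum>k. mpow (lazy P1) (k + N) *v y1 - mpow (lazy P2) (k + N) *v y2)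
           \<le> (max \<rho>1 \<rho>2)^N / (1 - max \<rho>1 \<rho>2) * vnorm_inf (y1 - y2) + 9/25 * mnorm_inf (P1 - P2) * (vnorm_inf y1 + vnorm_inf y2)"
    unfolding eqs g_def \<rho>_def .
  show "max C1 C2 \<ge> 1/2" using d2_C[OF ab sd1 m1] by simp
qed



definition Jm :: "real^'n \<Rightarrow> real^'n^'n" where "Jm \<mu> = (\<chi> i j. \<mu>$j)"

lemma stoch_J: "stochastic M \<Longrightarrow> M ** Jm \<mu> = Jm \<mu>"
  by (simp add: vec_eq_iff matrix_matrix_mult_def Jm_def sum_distrib_right[symmetric] stochastic_def)

lemma J_stat: assumes "\<mu> v* M = \<mu>" shows "Jm \<mu> ** M = Jm \<mu>"
proof -
  have "(\<Sum>k\<in>UNIV. \<mu>$k * M$k$j) = \<mu>$j" for j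
  proof -
    have "(\<mu> v* M)$j = \<mu>$j" using assms by simp
    then show ?thesis by (simp add: vector_matrix_mult_def mult.commute)
  qed
  then show ?thesis by (simp add: vec_eq_iff matrix_matrix_mult_def Jm_def)
qed

lemma J_J: "(\<Sum>j\<in>UNIV. \<mu>$j) = 1 \<Longrightarrow> Jm \<mu> ** Jm \<mu> = Jm \<mu>"
  by (simp add: vec_eq_iff matrix_matrix_mult_def Jm_def sum_distrib_right[symmetric])

lemma Q_pow:
  fixes P :: "real^'n^'n"
  assumes st: "stochastic P" and sd: "stationary_dist P \<mu>"
  shows "mpow (lazy P - Jm \<mu>) (Suc k) = mpow (lazy P) (Suc k) - Jm \<mu>"
proof (induction k)
  case 0 then show ?case by (simp add: mpow_Suc)
next
  case (Suc k)
  let ?L = "lazy P" and ?J = "Jm \<mu>"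
  have sL: "stochastic (mpow ?L (Suc k))" by (rule stoch_mpow[OF stoch_lazy[OF st]])
  have stat: "\<mu> v* ?L = \<mu>" using stat_lazy sd by (auto simp: stationary_dist_def)
  have s1: "(\<Sum>j\<in>UNIV. \<mu>$j) = 1" using sd by (simp add: stationary_dist_def)
  have "mpow (?L - ?J) (Suc (Suc k)) = (mpow ?L (Suc k) - ?J) ** (?L - ?J)"
    by (simp only: mpow_Suc[of _ "Suc k"] Suc)
  also have "\<dots> = mpow ?L (Suc k) ** ?L - mpow ?L (Suc k) ** ?J - (?J ** ?L - ?J ** ?J)"
    by (simp only: mm_diff_left mm_diff_right) (simp add: algebra_simps)
  also have "\<dots> = mpow ?L (Suc (Suc k)) - ?J"
    by (simp add: stoch_J[OF sL] J_stat[OF stat] J_J[OF s1] mpow_Suc[of _ "Suc k"])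
  finally show ?case .
qed

lemma Q_rows:
  fixes P :: "real^'n^'n"
  assumes st: "stochastic P" and sd: "stationary_dist P \<mu>" and mix: "mixing_params (lazy P) \<mu> C \<rho>"
  shows "(\<Sum>j\<in>UNIV. \<bar>mpow (lazy P - Jm \<mu>) (Suc k) $ i $ j\<bar>) \<le> 2 * C * \<rho>^Suc k"
proof -
  have "(\<Sum>j\<in>UNIV. \<bar>mpow (lazy P - Jm \<mu>) (Suc k) $ i $ j\<bar>) = 2 * tv_dist (mpow (lazy P) (Suc k) $ i) \<mu>"
    unfolding Q_pow[OF st sd] by (simp add: Jm_def tv_dist_def)
  also have "\<dots> \<le> 2 * (C * \<rho>^Suc k)" using tv_le[OF mix, of "Suc k" i] by simp
  finally show ?thesis by simp
qed

definition cmat :: "real^'n^'n \<Rightarrow> complex^'n^'n" where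
  "cmat A = (\<chi> i j. complex_of_real (A$i$j))"

lemma cmat_mult: "cmat (A ** B) = cmat A ** cmat B"
  by (simp add: cmat_def vec_eq_iff matrix_matrix_mult_def)

lemma cmat_one: "cmat (mat 1) = mat 1"
  by (simp add: cmat_def vec_eq_iff mat_def)

lemma mv_smult: "(A::'a::comm_semiring_1^'n^'m) *v (c *s x) = c *s (A *v x)"
  by (simp add: vec_eq_iff matrix_vector_mult_def sum_distrib_left mult_ac)

lemma cmat_pow_eig:
  assumes "cmat Q *v v = s *s v"
  shows "cmat (mpow Q k) *v v = s^k *s v"
proof (induction k)
  case 0 then show ?case by (simp add: cmat_one)
next
  case (Suc k)
  have "cmat (mpow Q (Suc k)) *v v = cmat Q *v (cmat (mpow Q k) *v v)"
    by (simp add: mpow_Suc' cmat_mult matrix_vector_mul_assoc)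
  also have "\<dots> = s^k *s (cmat Q *v v)" by (simp add: Suc mv_smult)
  also have "\<dots> = s^Suc k *s v" using assms by (simp add: mult.commute)
  finally show ?case .
qed

lemma exists_max_cmod: "\<exists>i. \<forall>j. cmod (v$j) \<le> cmod ((v::complex^'n)$i)"
proof -
  have "Max (range (\<lambda>j. cmod (v$j))) \<in> range (\<lambda>j. cmod (v$j))" by (rule Max_in) auto
  then obtain i where i: "Max (range (\<lambda>j. cmod (v$j))) = cmod (v$i)" by blast
  have "cmod (v$j) \<le> cmod (v$i)" for j unfolding i[symmetric] by (rule Max_ge) auto
  then show ?thesis by blast
qed

lemma eig_bound:
  fixes Q :: "real^'n^'n"
  assumes rows: "\<And>i k. (\<Sum>j\<in>UNIV. \<bar>mpow Q (Suc k) $ i $ j\<bar>) \<le> 2 * C * \<rho>^Suc k"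
    and rho: "0 < \<rho>" and eig: "cmat Q *v v = s *s v" and v0: "v \<noteq> 0"
  shows "cmod s \<le> \<rho>"
proof (rule ccontr)
  assume "\<not> cmod s \<le> \<rho>"
  then have gt: "cmod s > \<rho>" by simp
  obtain i where imax: "\<And>j. cmod (v$j) \<le> cmod (v$i)" using exists_max_cmod by blast
  have vi: "cmod (v$i) > 0"
  proof (rule ccontr)
    assume "\<not> cmod (v$i) > 0"
    then have "cmod (v$j) = 0" for j using imax[of j] by (smt (verit) norm_ge_zero)
    then have "v = 0" by (simp add: vec_eq_iff)
    then show False using v0 by simp
  qed
  have bnd: "cmod s ^ Suc k \<le> 2 * C * \<rho>^Suc k" for k
  proof -
    have "cmod s ^ Suc k * cmod (v$i) = cmod ((s^Suc k *s v)$i)" by (simp add: norm_mult norm_power)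
    also have "\<dots> = cmod ((cmat (mpow Q (Suc k)) *v v)$i)" by (simp add: cmat_pow_eig[OF eig])
    also have "\<dots> = cmod (\<Sum>j\<in>UNIV. complex_of_real (mpow Q (Suc k) $ i $ j) * v$j)"
      by (simp add: cmat_def matrix_vector_mult_def)
    also have "\<dots> \<le> (\<Sum>j\<in>UNIV. \<bar>mpow Q (Suc k) $ i $ j\<bar> * cmod (v$j))"
      by (rule order_trans[OF norm_sum]) (simp add: norm_mult)
    also have "\<dots> \<le> (\<Sum>j\<in>UNIV. \<bar>mpow Q (Suc k) $ i $ j\<bar> * cmod (v$i))"
      by (rule sum_mono) (simp add: imax mult_left_mono)
    also have "\<dots> = (\<Sum>j\<in>UNIV. \<bar>mpow Q (Suc k) $ i $ j\<bar>) * cmod (v$i)" by (simp add: sum_distrib_right)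
    also have "\<dots> \<le> 2 * C * \<rho>^Suc k * cmod (v$i)" by (rule mult_right_mono[OF rows]) simp
    finally show ?thesis using vi by simp
  qed
  define x where "x = cmod s / \<rho>"
  have x1: "1 < x" unfolding x_def using gt rho by simp
  obtain n where n: "2 * C < x^n" using real_arch_pow[OF x1] by blast
  have "x^n \<le> x^Suc n" using x1 by (simp add: power_increasing)
  moreover have "x^Suc n \<le> 2 * C"
  proof -
    have "x^Suc n = cmod s ^ Suc n / \<rho>^Suc n" unfolding x_def by (simp add: power_divide)
    also have "\<dots> \<le> 2 * C" using bnd[of n] rho by (simp add: divide_le_eq)
    finally show ?thesis .
  qed
  ultimately show False using n by simp
qed

lemma poly_det: "poly (det (M::'a::comm_ring_1 poly^'n^'n)) x = det (\<chi> i j. poly (M$i$j) x)"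
  by (simp add: det_def poly_sum poly_prod)

definition cpoly :: "complex^'n^'n \<Rightarrow> complex poly" where
  "cpoly A = det (\<chi> i j. if i = j then [:- A$i$j, 1:] else [:- A$i$j:])"

lemma cpoly_root:
  fixes A :: "complex^'n^'n"
  assumes "poly (cpoly A) s = 0"
  shows "\<exists>v. v \<noteq> 0 \<and> A *v v = s *s v"
proof -
  define M where "M = (\<chi> i j. (if i = j then s else 0) - A$i$j)"
  have "poly (cpoly A) s = det M"
    unfolding cpoly_def poly_det M_def by (rule arg_cong[where f=det]) (simp add: vec_eq_iff)
  then have d0: "det M = 0" using assms by simp
  have "\<not> inj ((*v) M)"
    using det_nz_iff_inj_gen[of "(*v) M"] d0 by (simp add: matrix_vector_mul_linear_gen)
  then obtain x y where xy: "x \<noteq> y" "M *v x = M *v y" unfolding inj_def by blast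
  define v where "v = x - y"
  have v0: "v \<noteq> 0" using xy unfolding v_def by simp
  have Mv: "M *v v = 0" using xy unfolding v_def by (simp add: matrix_vector_mult_diff_distrib)
  have "(M *v v)$i = s * v$i - (A *v v)$i" for i
  proof -
    have "(M *v v)$i = (\<Sum>j\<in>UNIV. ((if i = j then s else 0) - A$i$j) * v$j)"
      by (simp add: M_def matrix_vector_mult_def)
    also have "\<dots> = (\<Sum>j\<in>UNIV. (if i = j then s else 0) * v$j) - (\<Sum>j\<in>UNIV. A$i$j * v$j)"
      by (simp add: left_diff_distrib sum_subtractf)
    also have "(\<lambda>j. (if i = j then s else 0) * v$j) = (\<lambda>j. if i = j then s * v$j else 0)" by auto
    also have "(\<Sum>j\<in>UNIV. (if i = j then s * v$j else 0)) - (\<Sum>j\<in>UNIV. A$i$j * v$j) = s * v$i - (A *v v)$i"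
      by (simp add: matrix_vector_mult_def)
    finally show ?thesis .
  qed
  then have "A *v v = s *s v" using Mv by (simp add: vec_eq_iff)
  then show ?thesis using v0 by blast
qed

lemma lin_prod:
  fixes c :: "'i \<Rightarrow> 'a::comm_ring_1"
  assumes "finite A"
  shows "degree (\<Prod>i\<in>A. [:c i, 1:]) \<le> card A \<and> coeff (\<Prod>i\<in>A. [:c i, 1:]) (card A) = 1
     \<and> (A \<noteq> {} \<longrightarrow> coeff (\<Prod>i\<in>A. [:c i, 1:]) (card A - 1) = (\<Sum>i\<in>A. c i))"
  using assms
proof (induction A rule: finite_induct)
  case empty then show ?case by simp
next
  case (insert x F)
  define p where "p = (\<Prod>i\<in>F. [:c i, 1:])"
  define n where "n = card F"
  have IH: "degree p \<le> n" "coeff p n = 1" "F \<noteq> {} \<Longrightarrow> coeff p (n - 1) = (\<Sum>i\<in>F. c i)"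
    using insert.IH unfolding p_def n_def by auto
  have cn: "card (insert x F) = Suc n" using insert unfolding n_def by simp
  have e: "(\<Prod>i\<in>insert x F. [:c i, 1:]) = smult (c x) p + pCons 0 p"
    using insert unfolding p_def by simp
  have d: "degree (smult (c x) p + pCons 0 p) \<le> Suc n"
  proof -
    have "degree (smult (c x) p) \<le> Suc n" using IH(1) degree_smult_le[of "c x" p] by linarith
    moreover have "degree (pCons 0 p) \<le> Suc n" using IH(1) degree_pCons_le[of 0 p] by linarith
    ultimately show ?thesis by (meson degree_add_le)
  qed
  have c1: "coeff (smult (c x) p + pCons 0 p) (Suc n) = 1"
    using IH(1,2) by (simp add: coeff_eq_0)
  have c2: "coeff (smult (c x) p + pCons 0 p) n = (\<Sum>i\<in>insert x F. c i)"
  proof (cases "F = {}")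
    case True
    then have "p = 1" "n = 0" unfolding p_def n_def by auto
    then show ?thesis using True by simp
  next
    case False
    then have "n \<ge> 1" unfolding n_def using insert.hyps(1) by (simp add: Suc_leI card_gt_0_iff)
    then have "coeff (pCons 0 p) n = coeff p (n - 1)" by (cases n) auto
    then show ?thesis using IH(2,3) False insert.hyps by simp
  qed
  show ?case unfolding e cn using d c1 c2 by simp
qed

lemma perm_fix:
  assumes p: "p permutes (UNIV::'n::finite set)" and np: "p \<noteq> id"
  shows "card {i. p i = i} + 2 \<le> CARD('n)"
proof -
  obtain i where i: "p i \<noteq> i" using np by (auto simp: fun_eq_iff)
  have inj: "inj p" using p by (rule permutes_inj)
  have j: "p (p i) \<noteq> p i"
  proof
    assume "p (p i) = p i"
    then have "p i = i" using inj by (simp add: inj_eq)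
    then show False using i by simp
  qed
  have sub: "{k. p k = k} \<subseteq> UNIV - {i, p i}" using i j by auto
  have c1: "card {k. p k = k} \<le> card (UNIV - {i, p i})" by (rule card_mono[OF _ sub]) simp
  have c2: "card ((UNIV::'n set) - {i, p i}) = CARD('n) - 2" using i by (simp add: card_Diff_subset)
  have c3: "card {i, p i} \<le> CARD('n)" by (rule card_mono) auto
  then have "2 \<le> CARD('n)" using i by simp
  then show ?thesis using c1 c2 by linarith
qed

lemma cpoly_coeffs:
  fixes A :: "complex^'n^'n"
  assumes d2: "CARD('n) \<ge> 2"
  shows "degree (cpoly A) \<le> CARD('n)" "coeff (cpoly A) CARD('n) = 1"
    "coeff (cpoly A) (CARD('n) - 1) = - (\<Sum>i\<in>UNIV. A$i$i)"
proof -
  define M where "M = (\<chi> (i::'n) (j::'n). if i = j then [:- A$i$j, 1:] else [:- A$i$j:])"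
  define T where "T = (\<lambda>p. of_int (sign p) * (\<Prod>i\<in>UNIV. M$i$(p i)))"
  define Ps where "Ps = {p. p permutes (UNIV::'n set)}"
  have fin: "finite Ps" unfolding Ps_def by (rule finite_permutations) simp
  have idP: "id \<in> Ps" unfolding Ps_def by simp
  have cp: "cpoly A = T id + (\<Sum>p\<in>Ps - {id}. T p)"
    unfolding cpoly_def det_def M_def[symmetric] T_def[symmetric] Ps_def[symmetric]
    by (rule sum.remove[OF fin idP])
  have Tid: "T id = (\<Prod>i\<in>UNIV. [:- A$i$i, 1:])" unfolding T_def M_def by simp
  have degM: "degree (M$i$(p i)) = (if p i = i then 1 else 0)" for i p
    unfolding M_def by auto
  have degT: "degree (T p) \<le> CARD('n) - 2" if "p \<in> Ps - {id}" for p
  proof -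
    have pp: "p permutes UNIV" "p \<noteq> id" using that unfolding Ps_def by auto
    have "degree (T p) \<le> degree (\<Prod>i\<in>UNIV. M$i$(p i))"
      unfolding T_def of_int_poly using degree_smult_le by (simp add: degree_smult_le)
    also have "\<dots> \<le> (\<Sum>i\<in>UNIV. degree (M$i$(p i)))" using degree_prod_sum_le[of UNIV "\<lambda>i. M$i$(p i)"] by (simp add: o_def)
    also have "\<dots> = (\<Sum>i\<in>UNIV. if p i = i then 1 else 0)" by (simp add: degM)
    also have "\<dots> = card {i. p i = i}" by (simp add: sum.If_cases)
    also have "\<dots> \<le> CARD('n) - 2" using perm_fix[OF pp] by linarith
    finally show ?thesis .
  qed
  have degR: "degree (\<Sum>p\<in>Ps - {id}. T p) \<le> CARD('n) - 2"
    by (rule degree_sum_le) (use fin degT in auto)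
  have cR: "coeff (\<Sum>p\<in>Ps - {id}. T p) n = 0" if "n > CARD('n) - 2" for n
    by (rule coeff_eq_0) (use degR that in linarith)
  note lp = lin_prod[of UNIV "\<lambda>i. - A$i$i", simplified]
  show "degree (cpoly A) \<le> CARD('n)"
    unfolding cp Tid using lp degR by (intro degree_add_le) auto
  show "coeff (cpoly A) CARD('n) = 1"
    unfolding cp Tid using lp cR[of "CARD('n)"] d2 by simp
  show "coeff (cpoly A) (CARD('n) - 1) = - (\<Sum>i\<in>UNIV. A$i$i)"
    unfolding cp Tid using lp cR[of "CARD('n) - 1"] d2 by (simp add: sum_negf)
qed

lemma rho_lb:
  fixes P :: "real^'n^'n" and \<mu> :: "real^'n"
  assumes st: "stochastic P" and sd: "stationary_dist P \<mu>" and mix: "mixing_params (lazy P) \<mu> C \<rho>"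
  shows "real CARD('n) / 2 - 1 \<le> real CARD('n) * \<rho>"
proof (cases "CARD('n) \<ge> 2")
  case False
  from mix have "0 < \<rho>" by (simp add: mixing_params_def)
  then have "0 \<le> real CARD('n) * \<rho>" by simp
  moreover have "real CARD('n) \<le> 2" using False by simp
  then have "real CARD('n) / 2 \<le> 1" by simp
  ultimately show ?thesis by linarith
next
  case d2: True
  define d where "d = CARD('n)"
  define Q where "Q = lazy P - Jm \<mu>"
  define A where "A = cmat Q"
  define cp where "cp = cpoly A"
  from mix have rho: "0 < \<rho>" by (simp add: mixing_params_def)
  have rows: "\<And>i k. (\<Sum>j\<in>UNIV. \<bar>mpow Q (Suc k) $ i $ j\<bar>) \<le> 2 * C * \<rho>^Suc k"
    unfolding Q_def by (rule Q_rows[OF st sd mix])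
  note cc = cpoly_coeffs[OF d2, of A]
  have degcp: "degree cp = d"
  proof (rule antisym)
    show "degree cp \<le> d" unfolding cp_def d_def by (rule cc(1))
    show "d \<le> degree cp" unfolding cp_def d_def by (rule le_degree) (simp add: cc(2))
  qed
  have lc: "lead_coeff cp = 1" using cc(2) degcp unfolding cp_def d_def by simp
  obtain root where root: "smult (lead_coeff cp) (\<Prod>i<degree cp. [:-root i, 1:]) = cp"
    using complex_poly_decompose' by blast
  have cpe: "cp = (\<Prod>i<d. [:-root i, 1:])" using root lc degcp by simp
  have d1: "d \<ge> 1" using d2 unfolding d_def by simp
  have "coeff cp (d - 1) = (\<Sum>i<d. - root i)"
    using lin_prod[of "{..<d}" "\<lambda>i. - root i"] d1 unfolding cpe by auto
  moreover have "coeff cp (d - 1) = - (\<Sum>i\<in>UNIV. A$i$i)" unfolding cp_def d_def by (rule cc(3))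
  ultimately have tr: "(\<Sum>i\<in>UNIV. A$i$i) = (\<Sum>i<d. root i)" by (simp add: sum_negf)
  have rb: "cmod (root i) \<le> \<rho>" if "i < d" for i
  proof -
    have "poly cp (root i) = 0" unfolding cpe poly_prod using that by (auto intro: prod_zero)
    then obtain v where v: "v \<noteq> 0" "A *v v = root i *s v" using cpoly_root unfolding cp_def by blast
    show ?thesis by (rule eig_bound[OF rows rho _ v(1)]) (use v(2) in \<open>simp add: A_def\<close>)
  qed
  have trQ: "(\<Sum>i\<in>UNIV. A$i$i) = complex_of_real (\<Sum>i\<in>UNIV. Q$i$i)" unfolding A_def cmat_def by simp
  have "cmod (\<Sum>i<d. root i) = cmod (complex_of_real (\<Sum>i\<in>UNIV. Q$i$i))" by (simp only: tr[symmetric] trQ)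
  moreover have "cmod (complex_of_real (\<Sum>i\<in>UNIV. Q$i$i)) = \<bar>\<Sum>i\<in>UNIV. Q$i$i\<bar>" by (rule norm_of_real)
  ultimately have "\<bar>\<Sum>i\<in>UNIV. Q$i$i\<bar> = cmod (\<Sum>i<d. root i)" by linarith
  also have "\<dots> \<le> (\<Sum>i<d. cmod (root i))" by (rule norm_sum)
  also have "\<dots> \<le> (\<Sum>i<d. \<rho>)" by (rule sum_mono) (simp add: rb)
  also have "\<dots> = real d * \<rho>" by simp
  finally have up: "(\<Sum>i\<in>UNIV. Q$i$i) \<le> real d * \<rho>" by linarith
  have "(\<Sum>i\<in>UNIV. Q$i$i) = (\<Sum>i\<in>UNIV. lazy P $i$i) - (\<Sum>i\<in>UNIV. \<mu>$i)"
    unfolding Q_def Jm_def by (simp add: sum_subtractf)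
  also have "(\<Sum>i\<in>UNIV. \<mu>$i) = 1" using sd by (simp add: stationary_dist_def)
  finally have "(\<Sum>i\<in>UNIV. Q$i$i) = (\<Sum>i\<in>UNIV. lazy P $i$i) - 1" .
  moreover have "(\<Sum>i\<in>UNIV. lazy P $i$i) \<ge> (\<Sum>i\<in>(UNIV::'n set). 1/2)"
    by (rule sum_mono) (rule lazy_diag[OF st])
  ultimately have "real d / 2 - 1 \<le> (\<Sum>i\<in>UNIV. Q$i$i)" unfolding d_def by simp
  then show ?thesis using up unfolding d_def by linarith
qed

lemma part2:
  fixes P1 P2 :: "real^'n^'n" and \<mu>1 \<mu>2 y1 y2 :: "real^'n"
  assumes st1: "stochastic P1" and sd1: "stationary_dist P1 \<mu>1" and m1: "mixing_params (lazy P1) \<mu>1 C1 \<rho>1"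
    and st2: "stochastic P2" and sd2: "stationary_dist P2 \<mu>2" and m2: "mixing_params (lazy P2) \<mu>2 C2 \<rho>2"
    and y1: "\<mu>1 \<bullet> y1 = 0" and y2: "\<mu>2 \<bullet> y2 = 0" and neq: "P1 \<noteq> P2"
  shows "vnorm_inf ((\<Sum>k. mpow (lazy P1) k *v y1) /\<^sub>R 2 - (\<Sum>k. mpow (lazy P2) k *v y2) /\<^sub>R 2) \<le>
            1/4 * ((ln (mnorm_inf (P1 - P2) * (1 - max \<rho>1 \<rho>2)) - ln (8 * max C1 C2)) / ln (max \<rho>1 \<rho>2))^2
              * mnorm_inf (P1 - P2) * (vnorm_inf y1 + vnorm_inf y2)
            + 1/2 * ((ln (mnorm_inf (P1 - P2) * (1 - max \<rho>1 \<rho>2)) - ln (8 * max C1 C2)) / ln (max \<rho>1 \<rho>2))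
              * vnorm_inf (y1 - y2)"
proof -
  define C where "C = max C1 C2"
  define \<rho> where "\<rho> = max \<rho>1 \<rho>2"
  define \<epsilon> where "\<epsilon> = mnorm_inf (P1 - P2)"
  define K where "K = (ln (\<epsilon> * (1 - \<rho>)) - ln (8 * C)) / ln \<rho>"
  define S where "S = vnorm_inf y1 + vnorm_inf y2"
  define D where "D = vnorm_inf (y1 - y2)"
  define F1 where "F1 = (\<lambda>k. mpow (lazy P1) k *v y1)"
  define F2 where "F2 = (\<lambda>k. mpow (lazy P2) k *v y2)"
  define G where "G = (\<lambda>k. F1 k - F2 k)"
  from m1 m2 have p0: "0 < C1" "0 < C2" "0 < \<rho>1" "0 < \<rho>2" "\<rho>1 < 1" "\<rho>2 < 1" by (auto simp: mixing_params_def)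
  then have p: "0 < \<rho>" "\<rho> < 1" "0 < C" unfolding \<rho>_def C_def by auto
  have S0: "0 \<le> S" "0 \<le> D" unfolding S_def D_def by (auto intro: add_nonneg_nonneg vn_nonneg)
  have card: "CARD('n) \<ge> 2" by (rule card_ge2[OF st1 st2 neq])
  have epos: "0 < \<epsilon>" unfolding \<epsilon>_def by (rule eps_pos[OF neq])
  have ele: "\<epsilon> \<le> 8 * (C * \<rho>)" unfolding \<epsilon>_def C_def \<rho>_def by (rule eps_le[OF st1 sd1 m1 st2 sd2 m2 card])
  define r where "r = \<epsilon> * (1 - \<rho>) / (8 * C)"
  have rpos: "0 < r" unfolding r_def using epos p by simp
  have rlt: "r < \<rho>"
  proof -
    have "r \<le> 8 * (C * \<rho>) * (1 - \<rho>) / (8 * C)" unfolding r_def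
      using ele p by (intro divide_right_mono mult_right_mono) auto
    also have "\<dots> = \<rho> * (1 - \<rho>)" using p by (simp add: field_simps)
    also have "\<dots> < \<rho>" using p by (simp add: algebra_simps)
    finally show ?thesis .
  qed
  have Kr: "K = ln r / ln \<rho>" unfolding K_def r_def using epos p by (simp add: ln_div)
  have lnr: "ln \<rho> < 0" using p by simp
  have lnlt: "ln r < ln \<rho>" using rpos rlt by simp
  have K1: "K > 1" unfolding Kr using lnr lnlt by (simp add: less_divide_eq_1_neg)
  have rpK: "\<rho> powr K = r"
  proof -
    have "\<rho> powr K = exp (K * ln \<rho>)" using p by (simp add: powr_def)
    also have "K * ln \<rho> = ln r" unfolding Kr using lnr by simp
    finally show ?thesis using rpos by simp
  qed
  define N where "N = nat \<lfloor>K\<rfloor>"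
  define f where "f = K - real N"
  have NK: "real N = of_int \<lfloor>K\<rfloor>" unfolding N_def using K1 by simp
  have N1: "N \<ge> 1" unfolding N_def using K1 by linarith
  have f0: "0 \<le> f" "f < 1" unfolding f_def NK by linarith+
  have KNf: "K = real N + f" unfolding f_def by simp
  have rhoN: "\<rho>^N = r * (1/\<rho>) powr f"
  proof -
    have "\<rho>^N = \<rho> powr (real N)" using p by (simp add: powr_realpow)
    also have "\<dots> = \<rho> powr (K - f)" unfolding f_def by simp
    also have "\<dots> = \<rho> powr K / \<rho> powr f" by (rule powr_diff)
    also have "\<dots> = r * (1/\<rho>) powr f" using p rpK by (simp add: powr_divide)
    finally show ?thesis .
  qed
  note ps1 = poisson_series[OF m1 y1] and ps2 = poisson_series[OF m2 y2]
  have sG: "summable G" unfolding G_def F1_def F2_def using ps1(1) ps2(1) by (rule summable_diff)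
  have zdiff: "suminf F1 - suminf F2 = suminf G"
    unfolding G_def F1_def F2_def by (rule suminf_diff[OF ps1(1) ps2(1)])
  have split: "suminf G = (\<Sum>k. G (k + N)) + (\<Sum>k<N. G k)" by (rule suminf_split_initial_segment[OF sG])
  have head: "vnorm_inf (\<Sum>k<N. G k) \<le> real N * D + \<epsilon> * S * (real N * (real N - 1) / 8)"
    unfolding G_def F1_def F2_def D_def \<epsilon>_def S_def by (rule head_sum[OF st1 st2])
  define T where "T = vnorm_inf (\<Sum>k. G (k + N))"
  have Tg: "T \<le> 2 * C * \<rho>^N * S / (1 - \<rho>)"
    unfolding T_def G_def F1_def F2_def C_def \<rho>_def S_def by (rule tail_general(2)[OF m1 m2 y1 y2])
  have xeq: "(\<Sum>k. mpow (lazy P1) k *v y1) /\<^sub>R 2 - (\<Sum>k. mpow (lazy P2) k *v y2) /\<^sub>R 2 = (1/2) *\<^sub>R suminf G"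
    using zdiff unfolding F1_def F2_def by (simp add: scaleR_diff_right[symmetric])
  have tail: "\<exists>c. T \<le> f * D + \<epsilon> * S * c \<and> real N * (real N - 1) / 8 + c \<le> K^2 / 2"
  proof (cases "\<rho> \<ge> 1/6")
    case True
    have pf: "(1/\<rho>) powr f \<le> 1 + 5 * f"
    proof -
      have "(1/\<rho>) powr f \<le> 1 + f * (1/\<rho> - 1)" by (rule powr_le_lin) (use p f0 in auto)
      also have "\<dots> \<le> 1 + f * 5"
      proof -
        have "1/\<rho> \<le> 6" using True p by (simp add: field_simps)
        then show ?thesis using f0 by (intro add_left_mono mult_left_mono) auto
      qed
      finally show ?thesis by simp
    qed
    have "2 * C * \<rho>^N * S / (1 - \<rho>) = \<epsilon> / 4 * (1/\<rho>) powr f * S"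
      unfolding rhoN r_def using p by (simp add: field_simps)
    also have "\<dots> \<le> \<epsilon> / 4 * (1 + 5 * f) * S"
      using pf epos S0 by (intro mult_right_mono mult_left_mono) auto
    finally have X: "2 * C * \<rho>^N * S / (1 - \<rho>) \<le> \<epsilon> / 4 * (1 + 5 * f) * S" .
    have "\<epsilon> / 4 * (1 + 5 * f) * S = \<epsilon> * S * ((1 + 5 * f) / 4)" by simp
    moreover have "0 \<le> f * D" using f0 S0 by simp
    ultimately have "T \<le> f * D + \<epsilon> * S * ((1 + 5 * f) / 4)" using Tg X by linarith
    moreover have "real N * (real N - 1) / 8 + (1 + 5 * f) / 4 \<le> K^2 / 2"
      unfolding KNf by (rule final_real1[OF N1 f0])
    ultimately show ?thesis by blast
  next
    case False
    have card2: "CARD('n) = 2"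
    proof (rule ccontr)
      assume "CARD('n) \<noteq> 2"
      then have c3: "real CARD('n) \<ge> 3" using card by simp
      have "real CARD('n) / 2 - 1 \<le> real CARD('n) * \<rho>1" by (rule rho_lb[OF st1 sd1 m1])
      then have "real CARD('n) * (1/6) \<le> real CARD('n) * \<rho>1" using c3 by linarith
      then have "1/6 \<le> \<rho>1" using c3 by simp
      then show False using False unfolding \<rho>_def by simp
    qed
    have sm: "max \<rho>1 \<rho>2 < 1/6" using False unfolding \<rho>_def by simp
    note d2 = d2_facts[OF card2 st1 sd1 m1 st2 sd2 m2 y1 y2 sm N1]
    define g where "g = \<rho>^N / (1 - \<rho>)"
    have T1: "T \<le> g * D + 9/25 * \<epsilon> * S"
      using d2(1) unfolding T_def G_def F1_def F2_def g_def \<rho>_def D_def \<epsilon>_def S_def .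
    have T2: "T \<le> g * S"
      using d2(2) unfolding T_def G_def F1_def F2_def g_def \<rho>_def S_def .
    have Ch: "C \<ge> 1/2" using d2(3) unfolding C_def .
    have g0: "0 < g" unfolding g_def using p by simp
    have gS: "g * S \<le> \<epsilon> * (1/\<rho>) powr f * S / 4"
    proof -
      have "g * S = \<epsilon> * (1/\<rho>) powr f * S / (8 * C)"
        unfolding g_def rhoN r_def using p by (simp add: field_simps)
      also have "\<dots> \<le> \<epsilon> * (1/\<rho>) powr f * S / 4"
        using Ch epos S0 by (intro divide_left_mono mult_nonneg_nonneg) auto
      finally show ?thesis .
    qed
    have "T \<le> f * D + \<epsilon> * S * (1/2)"
    proof (cases "g \<le> f")
      case True
      have "g * D \<le> f * D" using True S0 by (intro mult_right_mono) auto
      moreover have "9/25 * \<epsilon> * S \<le> \<epsilon> * S * (1/2)" using epos S0 by simp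
      ultimately show ?thesis using T1 by linarith
    next
      case gf: False
      have pf: "(1/\<rho>) powr f \<le> 2"
      proof -
        have "(1/\<rho>) powr f \<le> 1 + f * (1/\<rho> - 1)" by (rule powr_le_lin) (use p f0 in auto)
        also have "\<dots> \<le> 1 + g * (1/\<rho> - 1)"
          using gf p by (intro add_left_mono mult_right_mono) (auto simp: field_simps)
        also have "g * (1/\<rho> - 1) = \<rho>^(N - 1)"
        proof -
          have "\<rho>^N = \<rho> * \<rho>^(N-1)" using N1 by (metis power_eq_if not_one_le_zero)
          then show ?thesis unfolding g_def using p by (simp add: field_simps)
        qed
        also have "\<rho>^(N-1) \<le> 1" using p by (simp add: power_le_one)
        finally show ?thesis by simp
      qed
      have "\<epsilon> * (1/\<rho>) powr f * S \<le> \<epsilon> * 2 * S"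
        using pf epos S0 by (intro mult_right_mono mult_left_mono) auto
      then have gS2: "g * S \<le> \<epsilon> * S * (1/2)" using gS by simp
      define l where "l = f / g"
      have l0: "0 \<le> l" "l \<le> 1" unfolding l_def using f0 g0 gf by auto
      have "T = l * T + (1 - l) * T" by (simp add: algebra_simps)
      also have "\<dots> \<le> l * (g * D + 9/25 * \<epsilon> * S) + (1 - l) * (\<epsilon> * S * (1/2))"
        using T1 T2 gS2 l0 by (intro add_mono mult_left_mono) auto
      also have "\<dots> = f * D + \<epsilon> * S * (9/25 * l + (1 - l) / 2)"
        unfolding l_def using g0 by (simp add: field_simps)
      also have "\<dots> \<le> f * D + \<epsilon> * S * (1/2)"
      proof -
        have "9/25 * l + (1 - l) / 2 \<le> 1/2" using l0 by (simp add: field_simps)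
        then show ?thesis using epos S0 by (intro add_left_mono mult_left_mono) auto
      qed
      finally show ?thesis .
    qed
    moreover have "real N * (real N - 1) / 8 + 1/2 \<le> K^2 / 2"
      unfolding KNf by (rule final_real2[OF N1 f0])
    ultimately show ?thesis by blast
  qed
  then obtain c where c: "T \<le> f * D + \<epsilon> * S * c" "real N * (real N - 1) / 8 + c \<le> K^2 / 2" by blast
  have "vnorm_inf (suminf G) \<le> T + vnorm_inf (\<Sum>k<N. G k)" unfolding split T_def by (rule vn_add)
  also have "\<dots> \<le> (f * D + \<epsilon> * S * c) + (real N * D + \<epsilon> * S * (real N * (real N - 1) / 8))"
    by (rule add_mono[OF c(1) head])
  also have "\<dots> = K * D + \<epsilon> * S * (real N * (real N - 1) / 8 + c)"
    unfolding KNf by (simp add: algebra_simps)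
  also have "\<dots> \<le> K * D + \<epsilon> * S * (K^2 / 2)"
    using c(2) epos S0 by (intro add_left_mono mult_left_mono) auto
  finally have main: "vnorm_inf (suminf G) \<le> K * D + \<epsilon> * S * (K^2 / 2)" .
  have "vnorm_inf ((\<Sum>k. mpow (lazy P1) k *v y1) /\<^sub>R 2 - (\<Sum>k. mpow (lazy P2) k *v y2) /\<^sub>R 2)
        = vnorm_inf (suminf G) / 2" unfolding xeq by (simp add: vn_scale)
  also have "\<dots> \<le> 1/4 * K^2 * \<epsilon> * S + 1/2 * K * D" using main by (simp add: field_simps)
  finally show ?thesis unfolding K_def \<epsilon>_def S_def D_def C_def \<rho>_def .
qed


theorem proposition1:
  fixes P P1 P2 :: "real^'n^'n" and \<mu> \<mu>1 \<mu>2 :: "real^'n"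
    and C \<rho> C1 \<rho>1 C2 \<rho>2 :: real
  assumes "stochastic P" "irreducible P" "stationary_dist P \<mu>"
    and "stochastic P1" "irreducible P1" "stationary_dist P1 \<mu>1"
    and "stochastic P2" "irreducible P2" "stationary_dist P2 \<mu>2"
    and "mixing_params (lazy P) \<mu> C \<rho>"
    and "mixing_params (lazy P1) \<mu>1 C1 \<rho>1"
    and "mixing_params (lazy P2) \<mu>2 C2 \<rho>2"
  shows
    "(\<forall>y::real^'n. \<mu> \<bullet> y = 0 \<longrightarrow>
        (let x = (\<Sum>k. mpow (lazy P) k *v y) /\<^sub>R 2 in
          summable (\<lambda>k. mpow (lazy P) k *v y) \<and>
          (mat 1 - P) *v x = y \<and>
          vnorm_inf x \<le> C / (1 - \<rho>) * vnorm_inf y))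
   \<and> (\<forall>y1 y2 :: real^'n. \<mu>1 \<bullet> y1 = 0 \<longrightarrow> \<mu>2 \<bullet> y2 = 0 \<longrightarrow> P1 \<noteq> P2 \<longrightarrow>
        (let x1 = (\<Sum>k. mpow (lazy P1) k *v y1) /\<^sub>R 2;
             x2 = (\<Sum>k. mpow (lazy P2) k *v y2) /\<^sub>R 2;
             Cmax = max C1 C2; \<rho>max = max \<rho>1 \<rho>2;
             \<epsilon> = mnorm_inf (P1 - P2);
             K = (ln (\<epsilon> * (1 - \<rho>max)) - ln (8 * Cmax)) / ln \<rho>max in
          vnorm_inf (x1 - x2) \<le>
            1/4 * K^2 * \<epsilon> * (vnorm_inf y1 + vnorm_inf y2)
            + 1/2 * K * vnorm_inf (y1 - y2)))"
  proof (intro conjI allI impI)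
  fix y :: "real^'n"
  assume "\<mu> \<bullet> y = 0"
  then show "let x = (\<Sum>k. mpow (lazy P) k *v y) /\<^sub>R 2 in
          summable (\<lambda>k. mpow (lazy P) k *v y) \<and>
          (mat 1 - P) *v x = y \<and>
          vnorm_inf x \<le> C / (1 - \<rho>) * vnorm_inf y"
    unfolding Let_def by (rule part1[OF assms(1) assms(3) assms(10)])
next
  fix y1 y2 :: "real^'n"
  assume h: "\<mu>1 \<bullet> y1 = 0" "\<mu>2 \<bullet> y2 = 0" "P1 \<noteq> P2"
  show "let x1 = (\<Sum>k. mpow (lazy P1) k *v y1) /\<^sub>R 2;
             x2 = (\<Sum>k. mpow (lazy P2) k *v y2) /\<^sub>R 2;
             Cmax = max C1 C2; \<rho>max = max \<rho>1 \<rho>2;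
             \<epsilon> = mnorm_inf (P1 - P2);
             K = (ln (\<epsilon> * (1 - \<rho>max)) - ln (8 * Cmax)) / ln \<rho>max in
          vnorm_inf (x1 - x2) \<le>
            1/4 * K^2 * \<epsilon> * (vnorm_inf y1 + vnorm_inf y2)
            + 1/2 * K * vnorm_inf (y1 - y2)"
    unfolding Let_def by (rule part2[OF assms(4) assms(6) assms(11) assms(7) assms(9) assms(12) h])
qed

end
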